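(* For all integers $n,k\ge1$, no closed abstraction belongs to $\llbracket\sharp(\mathbb B^{n+k})\multimap(\sharp(\mathbb B^n)\times\sharp(\mathbb B^k))\rrbracket_\emptyset$; that is, the type $\sharp(\mathbb B^{n+k})\multimap(\sharp(\mathbb B^n)\times\sharp(\mathbb B^k))$ is uninhabited.
   Context: **Syntax.** Terms: $t ::= x \mid |0\rangle \mid |1\rangle \mid \mathsf{if}\ t\ \mathsf{then}\ \vec s\ \mathsf{else}\ \vec s \mid \lambda x.\vec t \mid t\,t \mid (t,t) \mid \mathsf{let}\ (x,y)=t\ \mathsf{in}\ \vec t$. Superpositions: $\vec t ::= t \mid \vec 0 \mid \alpha\cdot\vec t \mid \vec t+\vec t$, with $\alpha$ an algebraic complex number. Basis values: $v ::= |0\rangle\mid|1\rangle\mid\lambda x.\vec t\mid(v,v)$. Values are superpositions of basis values. **Equivalence.** Superpositions are taken modulo the vector-space congruence $\equiv$: $+$ is commutative and associative, $\vec0$ is neutral, $0\cdot\vec t\equiv\vec0$, $1\cdot\vec t\equiv\vec t$, $\alpha\cdot(\beta\cdot\vec t)\equiv\alpha\beta\cdot\vec t$, $\alpha\cdot\vec t+\beta\cdot\vec t\equiv(\alpha+\beta)\cdot\vec t$, and $\alpha\cdot(\vec t_1+\vec t_2)\equiv\alpha\cdot\vec t_1+\alpha\cdot\vec t_2$. **Linear extension.** Constructors are extended linearly in their evaluated positions: - $s(\sum_i\alpha_i t_i)\triangleq\sum_i\alpha_i\cdot s\,t_i$; - $(\sum_i\alpha_is_i,\sum_j\beta_jt_j)\triangleq\sum_{i,j}\alpha_i\beta_j\cdot(s_i,t_j)$;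 - $\mathsf{if}$ and $\mathsf{let}$ distribute over a superposed guard or scrutinee. **Reduction $\rightsquigarrow$ (call-by-value, on closed superpositions).** - $\mathsf{if}\ |0\rangle\ \mathsf{then}\ \vec s\ \mathsf{else}\ \vec t\rightsquigarrow\vec s$ and $\mathsf{if}\ |1\rangle\ \mathsf{then}\ \vec s\ \mathsf{else}\ \vec t\rightsquigarrow\vec t$. - $(\lambda x.\vec t)\,v\rightsquigarrow\vec t[v/x]$ for a basis value $v$. - $\mathsf{let}\ (x,y)=(v,w)\ \mathsf{in}\ \vec t\rightsquigarrow\vec t[v/x,w/y]$. - Congruence rules reduce, using the linear extension: inside the guard of $\mathsf{if}$; in the argument of an application; in the function position when the argument is a basis value; in the first component of a pair; in the second component when the first is a basis value; and in the scrutinee of $\mathsf{let}$. - A superposition in canonical form $\sum_i\alpha_it_i+\sum_j\beta_jv_j$ reduces to $\sum_i\alpha_is_i+\sum_j\beta_jv_j$ when each $t_i\rightsquigarrow s_i$. Canonical form means: the superposed terms are pairwise distinct and all coefficients are nonzero. - Reduction is closed under $\equiv$. $\rightsquigarrow^*$ denotes the reflexive transitive closure of $\rightsquigarrow$. **Inner product and unit values.** On closed values, $\langle\sum_i\alpha_iv_i\mid\sum_j\beta_jw_j\rangle=\sum_{i,j}\overline{\alpha_i}\beta_j\delta_{v_i,w_j}$, where $\delta$ is the Kronecker delta on basis values. Let $\mathcal S_1$ be the set of closed values $\vec v$ with $|\langle\vec v|\vec v\rangle|^2=1$. **Base and span.** $\mathrm{base}(\vec v)$ is the set of basis values occurring with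 nonzero coefficient in $\vec v$. For a set $S$ of closed values, $\flat S=\bigcup_{\vec v\in S}\mathrm{base}(\vec v)$, and $\mathsf{span}(S)$ is the set of finite linear combinations of elements of $S$. **Realizability.** $\vec t\Vdash S$ iff $\vec t\rightsquigarrow^*\vec v$ for some $\vec v\in S$ (up to $\equiv$). **Types.** $A ::= X\mid A\multimap A\mid A\Rightarrow A\mid A\times A\mid Q\mid\S A\mid\forall X.A$, where ground types are $Q ::= \mathbb B\mid\sharp Q\mid\S Q\mid Q\times Q$. **Unitary semantics** (for $\tau$ mapping type variables to subsets of $\mathcal S_1$): - $\llbracket X\rrbracket_\tau=\tau(X)$; - $\llbracket\mathbb B\rrbracket_\tau=\{|0\rangle,|1\rangle\}$; - $\llbracket\sharp A\rrbracket_\tau=\mathsf{span}(\llbracket A\rrbracket_\tau)\cap\mathcal S_1$; - $\llbracket\S A\rrbracket_\tau=\llbracket A\rrbracket_\tau$; - $\llbracket A\multimap B\rrbracket_\tau=\{\lambda x.\vec t:\forall\vec v\in\llbracket A\rrbracket_\tau,(\lambda x.\vec t)\vec v\Vdash\llbracket B\rrbracket_\tau\}$; - $\llbracket A\Rightarrow B\rrbracket_\tau=\{\lambda x.\vec t:\forall v\in\flat\llbracket A\rrbracket_\tau,(\lambda x.\vec t)v\Vdash\llbracket B\rrbracket_\tau\}$; - $\llbracket A\times B\rrbracket_\tau=\{(\vec v,\vec w):\vec v\in\llbracket A\rrbracket_\tau,\vec w\in\llbracket B\rrbracket_\tau\}$; - $\llbracket\forall X.A\rrbracket_\tau=\bigcap_{R\subseteq\mathcal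 S_1}\llbracket A\rrbracket_{\tau\cup\{X\mapsto R\}}$. **Qubit notation.** $\mathbb B^1=\mathbb B$ and $\mathbb B^{m+1}=\mathbb B\times\mathbb B^m$. For $0\le i<2^n$ with binary digits $i_1\dots i_n$, let $|i\rangle\triangleq(|i_1\rangle,(|i_2\rangle,\dots(|i_{n-1}\rangle,|i_n\rangle)\dots))$. *)

theory Defs
  imports Complex_Main "HOL-Computational_Algebra.Polynomial"
begin

section \<open>Syntax (de Bruijn indices; Lam binds one variable, Let binds two)\<close>

text \<open>In  Let t b  the body b sees index 1 = x (first component) and index 0 = y.\<close>

datatype tm =
    Var nat
  | Ket0
  | Ket1
  | If tm sp sp
  | Lam sp
  | App tm tm
  | Pair tm tm
  | Let tm sp
and sp =
    Zero
  | Tm tm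
  | Scal complex sp
  | Plus sp sp

primrec closed_tm :: "nat \<Rightarrow> tm \<Rightarrow> bool" and closed_sp :: "nat \<Rightarrow> sp \<Rightarrow> bool" where
  "closed_tm n (Var i) = (i < n)"
| "closed_tm n Ket0 = True"
| "closed_tm n Ket1 = True"
| "closed_tm n (If t s1 s2) = (closed_tm n t \<and> closed_sp n s1 \<and> closed_sp n s2)"
| "closed_tm n (Lam b) = closed_sp (Suc n) b"
| "closed_tm n (App s t) = (closed_tm n s \<and> closed_tm n t)"
| "closed_tm n (Pair s t) = (closed_tm n s \<and> closed_tm n t)"
| "closed_tm n (Let t b) = (closed_tm n t \<and> closed_sp (Suc (Suc n)) b)"
| "closed_sp n Zero = True"
| "closed_sp n (Tm t) = closed_tm n t"
| "closed_sp n (Scal a s) = closed_sp n s"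
| "closed_sp n (Plus s1 s2) = (closed_sp n s1 \<and> closed_sp n s2)"

primrec alg_tm :: "tm \<Rightarrow> bool" and alg_sp :: "sp \<Rightarrow> bool" where
  "alg_tm (Var i) = True"
| "alg_tm Ket0 = True"
| "alg_tm Ket1 = True"
| "alg_tm (If t s1 s2) = (alg_tm t \<and> alg_sp s1 \<and> alg_sp s2)"
| "alg_tm (Lam b) = alg_sp b"
| "alg_tm (App s t) = (alg_tm s \<and> alg_tm t)"
| "alg_tm (Pair s t) = (alg_tm s \<and> alg_tm t)"
| "alg_tm (Let t b) = (alg_tm t \<and> alg_sp b)"
| "alg_sp Zero = True"
| "alg_sp (Tm t) = alg_tm t"
| "alg_sp (Scal a s) = (algebraic a \<and> alg_sp s)"
| "alg_sp (Plus s1 s2) = (alg_sp s1 \<and> alg_sp s2)"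

text \<open>Substitution of a closed term v for index k.\<close>
primrec subst_tm :: "nat \<Rightarrow> tm \<Rightarrow> tm \<Rightarrow> tm" and subst_sp :: "nat \<Rightarrow> tm \<Rightarrow> sp \<Rightarrow> sp" where
  "subst_tm k v (Var i) = (if i = k then v else if k < i then Var (i - 1) else Var i)"
| "subst_tm k v Ket0 = Ket0"
| "subst_tm k v Ket1 = Ket1"
| "subst_tm k v (If t s1 s2) = If (subst_tm k v t) (subst_sp k v s1) (subst_sp k v s2)"
| "subst_tm k v (Lam b) = Lam (subst_sp (Suc k) v b)"
| "subst_tm k v (App s t) = App (subst_tm k v s) (subst_tm k v t)"
| "subst_tm k v (Pair s t) = Pair (subst_tm k v s) (subst_tm k v t)"
| "subst_tm k v (Let t b) = Let (subst_tm k v t) (subst_sp (Suc (Suc k)) v b)"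
| "subst_sp k v Zero = Zero"
| "subst_sp k v (Tm t) = Tm (subst_tm k v t)"
| "subst_sp k v (Scal a s) = Scal a (subst_sp k v s)"
| "subst_sp k v (Plus s1 s2) = Plus (subst_sp k v s1) (subst_sp k v s2)"

primrec basis :: "tm \<Rightarrow> bool" where
  "basis (Var i) = False"
| "basis Ket0 = True"
| "basis Ket1 = True"
| "basis (If t s1 s2) = False"
| "basis (Lam b) = True"
| "basis (App s t) = False"
| "basis (Pair s t) = (basis s \<and> basis t)"
| "basis (Let t b) = False"

primrec is_value :: "sp \<Rightarrow> bool" where
  "is_value Zero = True"
| "is_value (Tm t) = basis t"
| "is_value (Scal a s) = is_value s"
| "is_value (Plus s1 s2) = (is_value s1 \<and> is_value s2)"

primrec spmap :: "(tm \<Rightarrow> tm) \<Rightarrow> sp \<Rightarrow> sp" where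
  "spmap f Zero = Zero"
| "spmap f (Tm t) = Tm (f t)"
| "spmap f (Scal a s) = Scal a (spmap f s)"
| "spmap f (Plus s1 s2) = Plus (spmap f s1) (spmap f s2)"

definition sum_sp :: "sp list \<Rightarrow> sp" where
  "sum_sp xs = foldr Plus xs Zero"

primrec coefs :: "sp \<Rightarrow> (complex \<times> tm) list" where
  "coefs Zero = []"
| "coefs (Tm t) = [(1, t)]"
| "coefs (Scal a s) = map (\<lambda>(b, t). (a * b, t)) (coefs s)"
| "coefs (Plus s1 s2) = coefs s1 @ coefs s2"

inductive teq :: "tm \<Rightarrow> tm \<Rightarrow> bool" and speq :: "sp \<Rightarrow> sp \<Rightarrow> bool" where
  teq_refl: "teq t t"
| teq_sym: "teq t u \<Longrightarrow> teq u t"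
| teq_trans: "teq t u \<Longrightarrow> teq u w \<Longrightarrow> teq t w"
| teq_If: "teq t t' \<Longrightarrow> speq s1 s1' \<Longrightarrow> speq s2 s2' \<Longrightarrow> teq (If t s1 s2) (If t' s1' s2')"
| teq_Lam: "speq b b' \<Longrightarrow> teq (Lam b) (Lam b')"
| teq_App: "teq s s' \<Longrightarrow> teq t t' \<Longrightarrow> teq (App s t) (App s' t')"
| teq_Pair: "teq s s' \<Longrightarrow> teq t t' \<Longrightarrow> teq (Pair s t) (Pair s' t')"
| teq_Let: "teq t t' \<Longrightarrow> speq b b' \<Longrightarrow> teq (Let t b) (Let t' b')"
| speq_refl: "speq s s"
| speq_sym: "speq s u \<Longrightarrow> speq u s"
| speq_trans: "speq s u \<Longrightarrow> speq u w \<Longrightarrow> speq s w"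
| speq_Tm: "teq t t' \<Longrightarrow> speq (Tm t) (Tm t')"
| speq_Scal: "speq s s' \<Longrightarrow> speq (Scal a s) (Scal a s')"
| speq_Plus: "speq s1 s1' \<Longrightarrow> speq s2 s2' \<Longrightarrow> speq (Plus s1 s2) (Plus s1' s2')"
| speq_comm: "speq (Plus s1 s2) (Plus s2 s1)"
| speq_assoc: "speq (Plus (Plus s1 s2) s3) (Plus s1 (Plus s2 s3))"
| speq_zero: "speq (Plus Zero s) s"
| speq_scal0: "speq (Scal 0 s) Zero"
| speq_scal1: "speq (Scal 1 s) s"
| speq_scal_scal: "speq (Scal a (Scal b s)) (Scal (a * b) s)"
| speq_scal_add: "speq (Plus (Scal a s) (Scal b s)) (Scal (a + b) s)"
| speq_scal_distr: "speq (Scal a (Plus s1 s2)) (Plus (Scal a s1) (Scal a s2))"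

inductive tred :: "tm \<Rightarrow> sp \<Rightarrow> bool" where
  if0: "tred (If Ket0 s1 s2) s1"
| if1: "tred (If Ket1 s1 s2) s2"
| beta: "basis v \<Longrightarrow> closed_tm 0 v \<Longrightarrow> tred (App (Lam b) v) (subst_sp 0 v b)"
| letpair: "basis v \<Longrightarrow> basis w \<Longrightarrow> closed_tm 0 v \<Longrightarrow> closed_tm 0 w \<Longrightarrow>
      tred (Let (Pair v w) b) (subst_sp 0 v (subst_sp 0 w b))"
| cong_if: "tred t r \<Longrightarrow> tred (If t s1 s2) (spmap (\<lambda>t'. If t' s1 s2) r)"
| cong_arg: "tred t r \<Longrightarrow> tred (App s t) (spmap (App s) r)"
| cong_fun: "tred s r \<Longrightarrow> basis v \<Longrightarrow> tred (App s v) (spmap (\<lambda>s'. App s' v) r)"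
| cong_pair1: "tred t r \<Longrightarrow> tred (Pair t u) (spmap (\<lambda>t'. Pair t' u) r)"
| cong_pair2: "tred u r \<Longrightarrow> basis v \<Longrightarrow> tred (Pair v u) (spmap (Pair v) r)"
| cong_let: "tred t r \<Longrightarrow> tred (Let t b) (spmap (\<lambda>t'. Let t' b) r)"
| equiv_src: "teq t t' \<Longrightarrow> alg_tm t' \<Longrightarrow> tred t' r \<Longrightarrow> tred t r"
| equiv_tgt: "tred t r \<Longrightarrow> speq r r' \<Longrightarrow> alg_sp r' \<Longrightarrow> tred t r'"

inductive sred :: "sp \<Rightarrow> sp \<Rightarrow> bool" where
  canon: "ts \<noteq> [] \<Longrightarrow>
      (\<forall>(a, t, s) \<in> set ts. a \<noteq> 0 \<and> tred t s) \<Longrightarrow>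
      (\<forall>(b, v) \<in> set vs. b \<noteq> 0 \<and> basis v) \<Longrightarrow>
      L = map (\<lambda>(a, t, s). t) ts @ map snd vs \<Longrightarrow>
      (\<forall>i < length L. \<forall>j < length L. i \<noteq> j \<longrightarrow> \<not> teq (L ! i) (L ! j)) \<Longrightarrow>
      sred (sum_sp (map (\<lambda>(a, t, s). Scal a (Tm t)) ts @ map (\<lambda>(b, v). Scal b (Tm v)) vs))
           (sum_sp (map (\<lambda>(a, t, s). Scal a s) ts @ map (\<lambda>(b, v). Scal b (Tm v)) vs))"
| equiv: "speq s s' \<Longrightarrow> alg_sp s' \<Longrightarrow> sred s' r' \<Longrightarrow> speq r' r \<Longrightarrow> alg_sp r' \<Longrightarrow> sred s r"

abbreviation sreds :: "sp \<Rightarrow> sp \<Rightarrow> bool" where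
  "sreds \<equiv> sred\<^sup>*\<^sup>*"

definition ip :: "sp \<Rightarrow> sp \<Rightarrow> complex" where
  "ip u w = (\<Sum>(a, v) \<leftarrow> coefs u. \<Sum>(b, v') \<leftarrow> coefs w. cnj a * b * (if teq v v' then 1 else 0))"

definition S1 :: "sp set" where
  "S1 = {v. is_value v \<and> closed_sp 0 v \<and> alg_sp v \<and> (cmod (ip v v))\<^sup>2 = 1}"

definition base :: "sp \<Rightarrow> tm set" where
  "base v = {w. basis w \<and> closed_tm 0 w \<and> alg_tm w \<and> ip (Tm w) v \<noteq> 0}"

definition flat :: "sp set \<Rightarrow> tm set" where
  "flat S = (\<Union>v \<in> S. base v)"

inductive_set span :: "sp set \<Rightarrow> sp set" for S :: "sp set" where
  span_zero: "Zero \<in> span S"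
| span_gen: "v \<in> S \<Longrightarrow> Scal a v \<in> span S"
| span_plus: "u \<in> span S \<Longrightarrow> w \<in> span S \<Longrightarrow> Plus u w \<in> span S"

definition pairsp :: "sp \<Rightarrow> sp \<Rightarrow> sp" where
  "pairsp u w = sum_sp [Scal (a * b) (Tm (Pair v v')). (a, v) \<leftarrow> coefs u, (b, v') \<leftarrow> coefs w]"

definition realizes :: "sp \<Rightarrow> sp set \<Rightarrow> bool" (infix "\<turnstile>r" 50) where
  "s \<turnstile>r S \<longleftrightarrow> (\<exists>v v'. sreds s v \<and> speq v v' \<and> v' \<in> S)"

datatype ty =
    TVar nat
  | Lolli ty ty
  | Arrow ty ty
  | Prod ty ty
  | Bool
  | Sharp ty
  | Para ty
  | All nat ty

primrec sem :: "ty \<Rightarrow> (nat \<Rightarrow> sp set) \<Rightarrow> sp set" where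
  "sem (TVar X) \<tau> = \<tau> X"
| "sem Bool \<tau> = {Tm Ket0, Tm Ket1}"
| "sem (Sharp A) \<tau> = span (sem A \<tau>) \<inter> S1"
| "sem (Para A) \<tau> = sem A \<tau>"
| "sem (Lolli A B) \<tau> = {Tm (Lam b) | b. closed_tm 0 (Lam b) \<and> alg_tm (Lam b) \<and>
      (\<forall>v \<in> sem A \<tau>. spmap (App (Lam b)) v \<turnstile>r sem B \<tau>)}"
| "sem (Arrow A B) \<tau> = {Tm (Lam b) | b. closed_tm 0 (Lam b) \<and> alg_tm (Lam b) \<and>
      (\<forall>v \<in> flat (sem A \<tau>). Tm (App (Lam b) v) \<turnstile>r sem B \<tau>)}"
| "sem (Prod A B) \<tau> = {pairsp v w | v w. v \<in> sem A \<tau> \<and> w \<in> sem B \<tau>}"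
| "sem (All X A) \<tau> = (\<Inter>R \<in> {R. R \<subseteq> S1}. sem A (\<tau>(X := R)))"

text \<open>B^1 = B, B^(m+1) = B x B^m  (B^0 is not used; set to B arbitrarily).\<close>
fun Bn :: "nat \<Rightarrow> ty" where
  "Bn 0 = Bool"
| "Bn (Suc 0) = Bool"
| "Bn (Suc (Suc m)) = Prod Bool (Bn (Suc m))"

definition empty_env :: "nat \<Rightarrow> sp set" where
  "empty_env = (\<lambda>_. {})"

end

theory Submission
  imports Defs
begin



datatype cls = C "tm set"

definition cl :: "tm \<Rightarrow> cls" where "cl t = C {u. teq t u}"

lemma cl_eq: "cl t = cl u \<longleftrightarrow> teq t u"
proof
  assume "cl t = cl u"
  then have "{v. teq t v} = {v. teq u v}" by (simp add: cl_def)
  moreover have "u \<in> {v. teq u v}" by (simp add: teq_refl)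
  ultimately show "teq t u" by (metis mem_Collect_eq)
next
  assume "teq t u"
  then show "cl t = cl u" unfolding cl_def
    by (auto intro: teq_trans teq_sym)
qed

definition cf :: "sp \<Rightarrow> cls \<Rightarrow> complex" where
  "cf s X = sum_list (map (\<lambda>(a,t). if cl t = X then a else 0) (coefs s))"

lemma sum_list_mult_const: "sum_list (map (\<lambda>x. a * f x) xs) = (a::complex) * sum_list (map f xs)"
  by (induction xs) (auto simp: algebra_simps)

lemma cf_Zero[simp]: "cf Zero X = 0" by (simp add: cf_def)
lemma cf_Tm[simp]: "cf (Tm t) X = (if cl t = X then 1 else 0)" by (simp add: cf_def)
lemma cf_Scal[simp]: "cf (Scal a s) X = a * cf s X"
  by (simp add: cf_def o_def case_prod_beta sum_list_mult_const[symmetric] if_distrib cong: if_cong)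
lemma cf_Plus[simp]: "cf (Plus s1 s2) X = cf s1 X + cf s2 X" by (simp add: cf_def)

lemma cf_sum_sp: "cf (sum_sp xs) X = sum_list (map (\<lambda>s. cf s X) xs)"
  by (induction xs) (auto simp: sum_sp_def)

lemma coefs_sum_sp: "coefs (sum_sp xs) = concat (map coefs xs)"
  by (induction xs) (auto simp: sum_sp_def)

lemma speq_cf_aux: "teq t u \<Longrightarrow> True" "speq s s' \<Longrightarrow> cf s = cf s'"
proof (induction rule: teq_speq.inducts)
  case (speq_Tm t t') then have "cl t = cl t'" by (simp add: cl_eq)
  then show ?case by (auto intro!: ext)
next
  case (speq_scal_add a s b) then show ?case by (auto intro!: ext simp: algebra_simps)
next
  case (speq_scal_distr a s1 s2) then show ?case by (auto intro!: ext simp: algebra_simps)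
qed (auto intro!: ext simp: algebra_simps)

lemma speq_cf: "speq s s' \<Longrightarrow> cf s = cf s'" using speq_cf_aux(2) by blast

fun tshape :: "tm \<Rightarrow> tm \<Rightarrow> bool" where
  "tshape (Var i) u = (u = Var i)"
| "tshape Ket0 u = (u = Ket0)"
| "tshape Ket1 u = (u = Ket1)"
| "tshape (If t s1 s2) u = (\<exists>t' s1' s2'. u = If t' s1' s2' \<and> teq t t' \<and> speq s1 s1' \<and> speq s2 s2')"
| "tshape (Lam b) u = (\<exists>b'. u = Lam b' \<and> speq b b')"
| "tshape (App s t) u = (\<exists>s' t'. u = App s' t' \<and> teq s s' \<and> teq t t')"
| "tshape (Pair s t) u = (\<exists>s' t'. u = Pair s' t' \<and> teq s s' \<and> teq t t')"
| "tshape (Let t b) u = (\<exists>t' b'. u = Let t' b' \<and> teq t t' \<and> speq b b')"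

lemma tshape_refl: "tshape t t"
  by (cases t) (auto intro: teq_refl speq_refl)

lemma tshape_sym: "tshape t u \<Longrightarrow> tshape u t"
  by (cases t) (auto intro: teq_sym speq_sym)

lemma tshape_trans: "tshape t u \<Longrightarrow> tshape u w \<Longrightarrow> tshape t w"
  by (cases t; auto; blast intro: teq_trans speq_trans)

lemma teq_tshape_aux: "teq t u \<Longrightarrow> tshape t u" "speq s s' \<Longrightarrow> True"
proof (induction rule: teq_speq.inducts)
qed (auto intro: tshape_refl tshape_sym tshape_trans)

lemma teq_tshape: "teq t u \<Longrightarrow> tshape t u" using teq_tshape_aux(1) by blast

lemma teq_basis_aux: "teq t u \<Longrightarrow> basis t = basis u" "speq s s' \<Longrightarrow> True"
  by (induction rule: teq_speq.inducts) auto

lemma teq_basis: "teq t u \<Longrightarrow> basis t = basis u" using teq_basis_aux(1) by blast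

lemma cl_Pair: "cl (Pair x y) = cl (Pair x' y') \<longleftrightarrow> cl x = cl x' \<and> cl y = cl y'"
  using teq_tshape[of "Pair x y" "Pair x' y'"] by (auto simp: cl_eq intro: teq_Pair)




lemma list_sum_classes:
  fixes xs :: "(complex \<times> tm) list" and G :: "cls \<Rightarrow> complex"
  assumes "finite A" "cl ` snd ` set xs \<subseteq> A" "\<forall>t\<in>snd ` set xs. g t = G (cl t)"
  shows "sum_list (map (\<lambda>(a,t). a * g t) xs)
       = (\<Sum>Y\<in>A. sum_list (map (\<lambda>(a,t). if cl t = Y then a else 0) xs) * G Y)"
  using assms(2,3)
proof (induction xs)
  case Nil then show ?case by auto
next
  case (Cons p xs)
  obtain a t where p: "p = (a,t)" by (cases p)
  have tA: "cl t \<in> A" using Cons.prems p by auto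
  have "(\<Sum>Y\<in>A. sum_list (map (\<lambda>(a,t). if cl t = Y then a else 0) (p#xs)) * G Y)
     = (\<Sum>Y\<in>A. (if cl t = Y then a else 0) * G Y) + (\<Sum>Y\<in>A. sum_list (map (\<lambda>(a,t). if cl t = Y then a else 0) xs) * G Y)"
    by (simp add: p distrib_right sum.distrib)
  also have "(\<Sum>Y\<in>A. (if cl t = Y then a else 0) * G Y) = (\<Sum>Y\<in>A. if cl t = Y then a * G Y else 0)"
    by (rule sum.cong) auto
  also have "\<dots> = a * G (cl t)"
    using assms(1) tA by (simp add: sum.delta)
  finally show ?case using Cons by (simp add: p)
qed

lemma sum_list_nz: "sum_list (map f xs) \<noteq> (0::complex) \<Longrightarrow> \<exists>x\<in>set xs. f x \<noteq> 0"
  by (induction xs) auto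

lemma cf_supp: "cf s Y \<noteq> 0 \<Longrightarrow> Y \<in> cl ` snd ` set (coefs s)"
proof -
  assume "cf s Y \<noteq> 0"
  then have "sum_list (map (\<lambda>(a,t). if cl t = Y then a else 0) (coefs s)) \<noteq> 0" by (simp add: cf_def)
  then obtain p where "p \<in> set (coefs s)" "(\<lambda>(a,t). if cl t = Y then a else 0) p \<noteq> 0"
    using sum_list_nz by blast
  moreover obtain a t where "p = (a,t)" by (cases p)
  ultimately show ?thesis by (force split: if_splits)
qed

definition rep :: "cls \<Rightarrow> tm" where "rep Y = (SOME t. cl t = Y)"

lemma rep_cl: "cl (rep (cl t)) = cl t"
  unfolding rep_def by (rule someI) auto

lemma lin_cf:
  assumes g: "\<And>t u. teq t u \<Longrightarrow> g t = g u" and eq: "cf r = cf r'"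
  shows "sum_list (map (\<lambda>(a,t). a * g t) (coefs r)) = sum_list (map (\<lambda>(a,t). a * g t) (coefs r'))"
proof -
  define A where "A = cl ` snd ` set (coefs r) \<union> cl ` snd ` set (coefs r')"
  define G where "G Y = g (rep Y)" for Y
  have gG: "g t = G (cl t)" for t using g rep_cl[of t] by (simp add: G_def cl_eq teq_sym)
  have fA: "finite A" by (simp add: A_def)
  have "sum_list (map (\<lambda>(a,t). a * g t) (coefs r)) = (\<Sum>Y\<in>A. cf r Y * G Y)"
    unfolding cf_def by (rule list_sum_classes) (auto simp: fA A_def gG)
  also have "\<dots> = (\<Sum>Y\<in>A. cf r' Y * G Y)" by (simp add: eq)
  also have "\<dots> = sum_list (map (\<lambda>(a,t). a * g t) (coefs r'))"
    unfolding cf_def by (rule list_sum_classes[symmetric]) (auto simp: fA A_def gG)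
  finally show ?thesis .
qed

lemma cf_as_sum: "cf s X = sum_list (map (\<lambda>(a,t). a * (if cl t = X then 1 else 0)) (coefs s))"
  unfolding cf_def by (intro arg_cong[where f=sum_list] map_cong) auto

lemma coefs_spmap: "coefs (spmap f r) = map (\<lambda>(a,t). (a, f t)) (coefs r)"
  by (induction r) (auto simp: o_def case_prod_beta)

lemma cf_spmap_aux: fixes xs :: "(complex \<times> tm) list" shows "sum_list (map (\<lambda>(a,t). if cl t = X then a else 0) (map (\<lambda>(a,t). (a, f t)) xs))
   = sum_list (map (\<lambda>(a,t). a * (if cl (f t) = X then 1 else 0)) xs)"
  by (induction xs) auto

lemma cf_spmap: "cf (spmap f r) X = sum_list (map (\<lambda>(a,t). a * (if cl (f t) = X then 1 else 0)) (coefs r))"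
  unfolding cf_def coefs_spmap by (rule cf_spmap_aux)

lemma cf_spmap_cong:
  assumes "\<And>t u. teq t u \<Longrightarrow> teq (f t) (f' u)" "cf r = cf r'"
  shows "cf (spmap f r) = cf (spmap f' r')"
proof
  fix X
  have f: "teq (f t) (f u)" if "teq t u" for t u
    using assms(1)[OF that] assms(1)[OF teq_refl[of u]] by (meson teq_sym teq_trans)
  have "cf (spmap f r) X = sum_list (map (\<lambda>(a,t). a * (if cl (f t) = X then 1 else 0)) (coefs r'))"
  proof (unfold cf_spmap, rule lin_cf)
    fix t u assume "teq t u"
    then have "cl (f t) = cl (f u)" using f by (simp add: cl_eq)
    then show "(if cl (f t) = X then 1 else 0) = (if cl (f u) = X then 1 else 0)" by simp
  qed (use assms(2) in simp)
  also have "\<dots> = cf (spmap f' r') X"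
    unfolding cf_spmap using assms(1)[OF teq_refl] by (simp add: cl_eq[symmetric])
  finally show "cf (spmap f r) X = cf (spmap f' r') X" .
qed

section \<open>Substitution\<close>

lemma subst_cong_aux: "teq t u \<Longrightarrow> \<forall>k. teq (subst_tm k v t) (subst_tm k v u)"
  "speq s s' \<Longrightarrow> \<forall>k. speq (subst_sp k v s) (subst_sp k v s')"
proof (induction rule: teq_speq.inducts)
  case (teq_sym t u) then show ?case by (blast intro: teq_speq.teq_sym)
next
  case (teq_trans t u w) then show ?case by (blast intro: teq_speq.teq_trans)
next
  case (speq_sym t u) then show ?case by (blast intro: teq_speq.speq_sym)
next
  case (speq_trans t u w) then show ?case by (blast intro: teq_speq.speq_trans)
qed (simp_all add: teq_speq.teq_refl teq_speq.speq_refl teq_speq.teq_If teq_speq.teq_Lam teq_speq.teq_App teq_speq.teq_Pair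
   teq_speq.teq_Let teq_speq.speq_Tm teq_speq.speq_Scal teq_speq.speq_Plus teq_speq.speq_comm teq_speq.speq_assoc
   teq_speq.speq_zero teq_speq.speq_scal0 teq_speq.speq_scal1 teq_speq.speq_scal_scal teq_speq.speq_scal_add teq_speq.speq_scal_distr)

lemma subst_val_aux: "teq v v' \<Longrightarrow> \<forall>k. teq (subst_tm k v t) (subst_tm k v' t)"
  "teq v v' \<Longrightarrow> \<forall>k. speq (subst_sp k v s) (subst_sp k v' s)"
  by (induction t and s) (simp_all add: teq_refl speq_refl teq_If teq_Lam teq_App teq_Pair teq_Let speq_Tm speq_Scal speq_Plus)

lemma subst_speq: "speq s s' \<Longrightarrow> teq v v' \<Longrightarrow> speq (subst_sp k v s) (subst_sp k v' s')"
  using subst_cong_aux(2) subst_val_aux(2) by (meson speq_trans)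

section \<open>Standard reduction\<close>

inductive tstd :: "tm \<Rightarrow> sp \<Rightarrow> bool" where
  s_if0: "tstd (If Ket0 s1 s2) s1"
| s_if1: "tstd (If Ket1 s1 s2) s2"
| s_beta: "basis v \<Longrightarrow> tstd (App (Lam b) v) (subst_sp 0 v b)"
| s_letpair: "basis v \<Longrightarrow> basis w \<Longrightarrow> tstd (Let (Pair v w) b) (subst_sp 0 v (subst_sp 0 w b))"
| s_cong_if: "tstd t r \<Longrightarrow> tstd (If t s1 s2) (spmap (\<lambda>t'. If t' s1 s2) r)"
| s_cong_arg: "tstd t r \<Longrightarrow> tstd (App s t) (spmap (App s) r)"
| s_cong_fun: "tstd s r \<Longrightarrow> basis v \<Longrightarrow> tstd (App s v) (spmap (\<lambda>s'. App s' v) r)"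
| s_cong_pair1: "tstd t r \<Longrightarrow> tstd (Pair t u) (spmap (\<lambda>t'. Pair t' u) r)"
| s_cong_pair2: "tstd u r \<Longrightarrow> basis v \<Longrightarrow> tstd (Pair v u) (spmap (Pair v) r)"
| s_cong_let: "tstd t r \<Longrightarrow> tstd (Let t b) (spmap (\<lambda>t'. Let t' b) r)"

lemma tstd_nbasis: "tstd t r \<Longrightarrow> \<not> basis t"
  by (induction rule: tstd.induct) auto

lemma tred_tstd: "tred t r \<Longrightarrow> \<exists>t' r'. teq t t' \<and> tstd t' r' \<and> cf r' = cf r"
proof (induction rule: tred.induct)
  case (if0 s1 s2) then show ?case by (blast intro: teq_refl tstd.intros)
next
  case (if1 s1 s2) then show ?case by (blast intro: teq_refl tstd.intros)
next
  case (beta v b) then show ?case by (blast intro: teq_refl tstd.intros)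
next
  case (letpair v w b) then show ?case by (blast intro: teq_refl tstd.intros)
next
  case (cong_if t r s1 s2)
  then obtain t' r' where h: "teq t t'" "tstd t' r'" "cf r' = cf r" by blast
  show ?case
    apply (rule exI[of _ "If t' s1 s2"], rule exI[of _ "spmap (\<lambda>t'. If t' s1 s2) r'"])
    using h by (auto intro!: teq_If teq_refl speq_refl tstd.intros cf_spmap_cong)
next
  case (cong_arg t r s)
  then obtain t' r' where h: "teq t t'" "tstd t' r'" "cf r' = cf r" by blast
  show ?case
    apply (rule exI[of _ "App s t'"], rule exI[of _ "spmap (App s) r'"])
    using h by (auto intro!: teq_App teq_refl tstd.intros cf_spmap_cong)
next
  case (cong_fun s r v)
  then obtain t' r' where h: "teq s t'" "tstd t' r'" "cf r' = cf r" by blast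
  show ?case
    apply (rule exI[of _ "App t' v"], rule exI[of _ "spmap (\<lambda>s'. App s' v) r'"])
    using h cong_fun by (auto intro!: teq_App teq_refl tstd.intros cf_spmap_cong)
next
  case (cong_pair1 t r u)
  then obtain t' r' where h: "teq t t'" "tstd t' r'" "cf r' = cf r" by blast
  show ?case
    apply (rule exI[of _ "Pair t' u"], rule exI[of _ "spmap (\<lambda>t'. Pair t' u) r'"])
    using h by (auto intro!: teq_Pair teq_refl tstd.intros cf_spmap_cong)
next
  case (cong_pair2 u r v)
  then obtain t' r' where h: "teq u t'" "tstd t' r'" "cf r' = cf r" by blast
  show ?case
    apply (rule exI[of _ "Pair v t'"], rule exI[of _ "spmap (Pair v) r'"])
    using h cong_pair2 by (auto intro!: teq_Pair teq_refl tstd.intros cf_spmap_cong)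
next
  case (cong_let t r b)
  then obtain t' r' where h: "teq t t'" "tstd t' r'" "cf r' = cf r" by blast
  show ?case
    apply (rule exI[of _ "Let t' b"], rule exI[of _ "spmap (\<lambda>t'. Let t' b) r'"])
    using h by (auto intro!: teq_Let teq_refl speq_refl tstd.intros cf_spmap_cong)
next
  case (equiv_src t t' r)
  then show ?case by (meson teq_trans)
next
  case (equiv_tgt t r r')
  then show ?case using speq_cf by metis
qed




lemma teq_Ket0: "teq Ket0 u \<Longrightarrow> u = Ket0" using teq_tshape by fastforce
lemma teq_Ket1: "teq Ket1 u \<Longrightarrow> u = Ket1" using teq_tshape by fastforce

lemma tstd_det: "tstd t r \<Longrightarrow> tstd t' r' \<Longrightarrow> teq t t' \<Longrightarrow> cf r = cf r'"
proof (induction arbitrary: t' r' rule: tstd.induct)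
  case (s_if0 s1 s2)
  from teq_tshape[OF s_if0(2)] obtain g s1' s2' where h: "t' = If g s1' s2'" "teq Ket0 g" "speq s1 s1'" by auto
  from h(2) have g: "g = Ket0" by (rule teq_Ket0)
  from s_if0(1)[unfolded h g] show ?case
    by (cases rule: tstd.cases) (use h speq_cf tstd_nbasis[of Ket0] tstd_nbasis[of Ket1] in auto)
next
  case (s_if1 s1 s2)
  from teq_tshape[OF s_if1(2)] obtain g s1' s2' where h: "t' = If g s1' s2'" "teq Ket1 g" "speq s2 s2'" by auto
  from h(2) have g: "g = Ket1" by (rule teq_Ket1)
  from s_if1(1)[unfolded h g] show ?case
    by (cases rule: tstd.cases) (use h speq_cf tstd_nbasis[of Ket0] tstd_nbasis[of Ket1] in auto)
next
  case (s_beta v b)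
  from teq_tshape[OF s_beta(3)] obtain f v' where h: "t' = App f v'" "teq (Lam b) f" "teq v v'" by auto
  from teq_tshape[OF h(2)] obtain b' where hb: "f = Lam b'" "speq b b'" by auto
  have bv': "basis v'" using s_beta(1) h(3) teq_basis by blast
  from s_beta(2)[unfolded h hb] show ?case
  proof (cases rule: tstd.cases)
    case (s_beta) then show ?thesis using speq_cf subst_speq hb h by auto
  qed (use bv' tstd_nbasis tstd_nbasis[of "Lam b'"] in auto)
next
  case (s_letpair v w b)
  from teq_tshape[OF s_letpair(4)] obtain p b' where h: "t' = Let p b'" "teq (Pair v w) p" "speq b b'" by auto
  from teq_tshape[OF h(2)] obtain v' w' where hp: "p = Pair v' w'" "teq v v'" "teq w w'" by auto
  have bp: "basis (Pair v' w')" using s_letpair(1,2) hp teq_basis by auto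
  from s_letpair(3)[unfolded h hp] show ?case
  proof (cases rule: tstd.cases)
    case (s_letpair) then show ?thesis using speq_cf subst_speq hp h by auto
  qed (use bp tstd_nbasis[of "Pair v' w'"] in auto)
next
  case (s_cong_if t r s1 s2)
  from teq_tshape[OF s_cong_if(4)] obtain g s1' s2' where h: "t' = If g s1' s2'" "teq t g" "speq s1 s1'" "speq s2 s2'" by auto
  have ng: "\<not> basis g" using tstd_nbasis[OF s_cong_if(1)] h(2) teq_basis by blast
  from s_cong_if(3)[unfolded h] show ?case
  proof (cases rule: tstd.cases)
    case (s_cong_if r0)
    have "cf r = cf r0" using s_cong_if.IH s_cong_if(2) h(2) by blast
    then show ?thesis unfolding \<open>r' = _\<close> by (rule cf_spmap_cong[rotated]) (use h in \<open>auto intro: teq_If\<close>)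
  qed (use ng in auto)
next
  case (s_cong_arg t r s)
  from teq_tshape[OF s_cong_arg(4)] obtain s' u where h: "t' = App s' u" "teq s s'" "teq t u" by auto
  have ng: "\<not> basis u" using tstd_nbasis[OF s_cong_arg(1)] h(3) teq_basis by blast
  from s_cong_arg(3)[unfolded h] show ?case
  proof (cases rule: tstd.cases)
    case (s_cong_arg r0)
    have "cf r = cf r0" using s_cong_arg.IH s_cong_arg(2) h(3) by blast
    then show ?thesis unfolding \<open>r' = _\<close> by (rule cf_spmap_cong[rotated]) (use h in \<open>auto intro: teq_App\<close>)
  qed (use ng in auto)
next
  case (s_cong_fun s r v)
  from teq_tshape[OF s_cong_fun(5)] obtain s' u where h: "t' = App s' u" "teq s s'" "teq v u" by auto
  have ng: "\<not> basis s'" using tstd_nbasis[OF s_cong_fun(1)] h(2) teq_basis by blast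
  have bu: "basis u" using s_cong_fun(2) h(3) teq_basis by blast
  from s_cong_fun(4)[unfolded h] show ?case
  proof (cases rule: tstd.cases)
    case (s_cong_fun r0)
    have "cf r = cf r0" using s_cong_fun.IH s_cong_fun(2) h(2) by blast
    then show ?thesis unfolding \<open>r' = _\<close> by (rule cf_spmap_cong[rotated]) (use h in \<open>auto intro: teq_App\<close>)
  qed (use ng bu tstd_nbasis in auto)
next
  case (s_cong_pair1 t r u)
  from teq_tshape[OF s_cong_pair1(4)] obtain t0 u0 where h: "t' = Pair t0 u0" "teq t t0" "teq u u0" by auto
  have ng: "\<not> basis t0" using tstd_nbasis[OF s_cong_pair1(1)] h(2) teq_basis by blast
  from s_cong_pair1(3)[unfolded h] show ?case
  proof (cases rule: tstd.cases)
    case (s_cong_pair1 r0)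
    have "cf r = cf r0" using s_cong_pair1.IH s_cong_pair1(2) h(2) by blast
    then show ?thesis unfolding \<open>r' = _\<close> by (rule cf_spmap_cong[rotated]) (use h in \<open>auto intro: teq_Pair\<close>)
  qed (use ng in auto)
next
  case (s_cong_pair2 u r v)
  from teq_tshape[OF s_cong_pair2(5)] obtain v0 u0 where h: "t' = Pair v0 u0" "teq v v0" "teq u u0" by auto
  have ng: "\<not> basis u0" using tstd_nbasis[OF s_cong_pair2(1)] h(3) teq_basis by blast
  have bv: "basis v0" using s_cong_pair2(2) h(2) teq_basis by blast
  from s_cong_pair2(4)[unfolded h] show ?case
  proof (cases rule: tstd.cases)
    case (s_cong_pair2 r0)
    have "cf r = cf r0" using s_cong_pair2.IH s_cong_pair2(2) h(3) by blast
    then show ?thesis unfolding \<open>r' = _\<close> by (rule cf_spmap_cong[rotated]) (use h in \<open>auto intro: teq_Pair\<close>)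
  qed (use ng bv tstd_nbasis in auto)
next
  case (s_cong_let t r b)
  from teq_tshape[OF s_cong_let(4)] obtain t0 b0 where h: "t' = Let t0 b0" "teq t t0" "speq b b0" by auto
  have ng: "\<not> basis t0" using tstd_nbasis[OF s_cong_let(1)] h(2) teq_basis by blast
  from s_cong_let(3)[unfolded h] show ?case
  proof (cases rule: tstd.cases)
    case (s_cong_let r0)
    have "cf r = cf r0" using s_cong_let.IH s_cong_let(2) h(2) by blast
    then show ?thesis unfolding \<open>r' = _\<close> by (rule cf_spmap_cong[rotated]) (use h in \<open>auto intro: teq_Let\<close>)
  qed (use ng in auto)
qed

lemma tred_det: "tred t r \<Longrightarrow> tred t' r' \<Longrightarrow> teq t t' \<Longrightarrow> cf r = cf r'"
proof -
  assume a: "tred t r" "tred t' r'" "teq t t'"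
  obtain t1 r1 where 1: "teq t t1" "tstd t1 r1" "cf r1 = cf r" using tred_tstd[OF a(1)] by blast
  obtain t2 r2 where 2: "teq t' t2" "tstd t2 r2" "cf r2 = cf r'" using tred_tstd[OF a(2)] by blast
  have "teq t1 t2" using 1(1) 2(1) a(3) by (meson teq_sym teq_trans)
  then show ?thesis using tstd_det[OF 1(2) 2(2)] 1(3) 2(3) by simp
qed

lemma tred_nbasis: "tred t r \<Longrightarrow> \<not> basis t"
  using tred_tstd tstd_nbasis teq_basis by blast




definition Esp :: "cls \<Rightarrow> sp" where
  "Esp Y = (if \<exists>t. cl t = Y \<and> basis t then Tm (rep Y)
     else if \<exists>t r. cl t = Y \<and> tred t r then (SOME r. \<exists>t. cl t = Y \<and> tred t r) else Zero)"

lemma Esp_basis: "basis t \<Longrightarrow> cf (Esp (cl t)) = cf (Tm t)"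
  unfolding Esp_def using rep_cl[of t] by (auto intro!: ext)

lemma Esp_tred: assumes "tred t r" shows "cf (Esp (cl t)) = cf r"
proof -
  have nb: "\<not> (\<exists>t'. cl t' = cl t \<and> basis t')"
    using tred_nbasis[OF assms] teq_basis cl_eq by metis
  have ex: "\<exists>r. \<exists>t'. cl t' = cl t \<and> tred t' r" using assms by blast
  obtain t0 where t0: "cl t0 = cl t" "tred t0 (SOME r. \<exists>t'. cl t' = cl t \<and> tred t' r)"
    using someI_ex[OF ex] by blast
  have "Esp (cl t) = (SOME r. \<exists>t'. cl t' = cl t \<and> tred t' r)"
    unfolding Esp_def using nb assms by auto
  then show ?thesis using tred_det[OF t0(2) assms] t0(1) by (simp add: cl_eq)
qed

definition stepsp :: "sp \<Rightarrow> sp" where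
  "stepsp s = sum_sp (map (\<lambda>(a,t). Scal a (Esp (cl t))) (coefs s))"

lemma cf_stepsp_aux: "sum_list (map (\<lambda>s. cf s X) (map (\<lambda>(a,t). Scal a (Esp (cl t))) xs)) = sum_list (map (\<lambda>(a,t). a * cf (Esp (cl t)) X) xs)"
  by (induction xs) auto

lemma cf_stepsp: "cf (stepsp s) X = sum_list (map (\<lambda>(a,t). a * cf (Esp (cl t)) X) (coefs s))"
  unfolding stepsp_def cf_sum_sp by (rule cf_stepsp_aux)

lemma stepsp_cong: "cf s = cf s' \<Longrightarrow> cf (stepsp s) = cf (stepsp s')"
  unfolding cf_stepsp by (intro ext lin_cf) (auto simp: cl_eq[symmetric])

lemma sum_list_scal: "sum_list (map (\<lambda>(b,t). b * g t) (map (\<lambda>(b,t). (a * b, t)) xs)) = (a::complex) * sum_list (map (\<lambda>(b,t). b * g t) xs)"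
  by (induction xs) (auto simp: algebra_simps)

lemma cf_stepsp_Plus: "cf (stepsp (Plus s1 s2)) X = cf (stepsp s1) X + cf (stepsp s2) X"
  unfolding cf_stepsp by simp

lemma cf_stepsp_Scal: "cf (stepsp (Scal a s)) X = a * cf (stepsp s) X"
  unfolding cf_stepsp coefs.simps by (rule sum_list_scal)

lemma cf_stepsp_Zero: "cf (stepsp Zero) X = 0"
  unfolding cf_stepsp by simp

lemma cf_stepsp_Tm: "cf (stepsp (Tm t)) X = cf (Esp (cl t)) X"
  unfolding cf_stepsp by simp

lemma cf_stepsp_sum_sp: "cf (stepsp (sum_sp xs)) X = sum_list (map (\<lambda>s. cf (stepsp s) X) xs)"
  by (induction xs) (auto simp: sum_sp_def cf_stepsp_Plus cf_stepsp_Zero)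

lemma sred_step: "sred s s' \<Longrightarrow> cf s' = cf (stepsp s)"
proof (induction rule: sred.induct)
  case (canon ts vs L)
  show ?case
  proof
    fix X
    show "cf (sum_sp (map (\<lambda>(a, t, s). Scal a s) ts @ map (\<lambda>(b, v). Scal b (Tm v)) vs)) X =
          cf (stepsp (sum_sp (map (\<lambda>(a, t, s). Scal a (Tm t)) ts @ map (\<lambda>(b, v). Scal b (Tm v)) vs))) X"
      unfolding cf_stepsp_sum_sp cf_sum_sp map_append sum_list_append
    proof (rule arg_cong2[where f="(+)"])
      show "sum_list (map (\<lambda>s. cf s X) (map (\<lambda>(a, t, s). Scal a s) ts)) =
            sum_list (map (\<lambda>s. cf (stepsp s) X) (map (\<lambda>(a, t, s). Scal a (Tm t)) ts))"
        using canon(2) by (intro arg_cong[where f=sum_list]) (auto simp: cf_stepsp_Scal cf_stepsp_Tm Esp_tred)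
      show "sum_list (map (\<lambda>s. cf s X) (map (\<lambda>(b, v). Scal b (Tm v)) vs)) =
            sum_list (map (\<lambda>s. cf (stepsp s) X) (map (\<lambda>(b, v). Scal b (Tm v)) vs))"
        using canon(3) by (intro arg_cong[where f=sum_list]) (auto simp: cf_stepsp_Scal cf_stepsp_Tm Esp_basis)
    qed
  qed
next
  case (equiv s s' r' r)
  then show ?case using speq_cf stepsp_cong by metis
qed

lemma stepsp_iter_cong: "cf s = cf s' \<Longrightarrow> cf ((stepsp^^m) s) = cf ((stepsp^^m) s')"
proof (induction m)
  case (Suc m) then show ?case using stepsp_cong[of "(stepsp^^m) s" "(stepsp^^m) s'"] by simp
qed simp

lemma sreds_step: "sreds s w \<Longrightarrow> \<exists>m. cf w = cf ((stepsp^^m) s)"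
proof (induction rule: rtranclp_induct)
  case base show ?case by (rule exI[of _ 0]) simp
next
  case (step w w')
  then obtain m where "cf w = cf ((stepsp^^m) s)" by blast
  then have "cf (stepsp w) = cf (stepsp ((stepsp^^m) s))" by (rule stepsp_cong)
  then have "cf w' = cf (stepsp ((stepsp^^m) s))" using sred_step[OF step(2)] by simp
  then show ?case by (intro exI[of _ "Suc m"]) simp
qed

lemma iter_lin: "cf ((stepsp^^m) (Plus (Scal a s1) (Scal b s2))) X = a * cf ((stepsp^^m) s1) X + b * cf ((stepsp^^m) s2) X"
proof (induction m arbitrary: X)
  case 0 then show ?case by simp
next
  case (Suc m)
  have h: "cf ((stepsp^^m) (Plus (Scal a s1) (Scal b s2))) = cf (Plus (Scal a ((stepsp^^m) s1)) (Scal b ((stepsp^^m) s2)))"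
    using Suc by (intro ext) simp
  then have "cf ((stepsp^^Suc m) (Plus (Scal a s1) (Scal b s2))) = cf (stepsp (Plus (Scal a ((stepsp^^m) s1)) (Scal b ((stepsp^^m) s2))))"
    using stepsp_cong[OF h] by simp
  then show ?case by (simp add: cf_stepsp_Plus cf_stepsp_Scal)
qed

lemma value_coefs_basis: "is_value v \<Longrightarrow> (a,t) \<in> set (coefs v) \<Longrightarrow> basis t"
  by (induction v arbitrary: a) auto

definition bcoefs where "bcoefs v \<longleftrightarrow> (\<forall>(a,t)\<in>set (coefs v). basis t)"

lemma stepsp_fix: assumes "bcoefs v" shows "cf (stepsp v) = cf v"
proof
  fix X
  have "cf (stepsp v) X = sum_list (map (\<lambda>(a,t). a * (if cl t = X then 1 else 0)) (coefs v))"
    unfolding cf_stepsp using assms unfolding bcoefs_def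
    by (intro arg_cong[where f=sum_list] map_cong) (auto simp: Esp_basis)
  then show "cf (stepsp v) X = cf v X" by (simp add: cf_as_sum)
qed

lemma iter_fix: "bcoefs v \<Longrightarrow> cf s = cf v \<Longrightarrow> cf ((stepsp^^m) s) = cf v"
proof (induction m)
  case 0 then show ?case by simp
next
  case (Suc m)
  then have "cf (stepsp ((stepsp^^m) s)) = cf (stepsp v)" by (intro stepsp_cong) simp
  then show ?case using stepsp_fix[OF Suc(2)] by simp
qed

lemma iter_after: assumes "cf ((stepsp^^m) s) = cf v" "bcoefs v" "m \<le> M"
  shows "cf ((stepsp^^M) s) = cf v"
proof -
  have "(stepsp^^M) s = (stepsp^^(M-m)) ((stepsp^^m) s)"
  proof -
    have "M = (M-m) + m" using assms(3) by simp
    then have "(stepsp^^M) = (stepsp^^(M-m)) \<circ> (stepsp^^m)" by (metis funpow_add)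
    then show ?thesis by simp
  qed
  then show ?thesis using iter_fix[OF assms(2) assms(1)] by simp
qed




lemma cnj_sum_list: "cnj (sum_list (map f xs)) = sum_list (map (\<lambda>x. cnj (f x)) xs)"
  by (induction xs) auto

lemma ip_list: "ip u w = sum_list (map (\<lambda>(a,v). cnj a * cf w (cl v)) (coefs u))"
  unfolding ip_def
proof (intro arg_cong[where f=sum_list] map_cong refl)
  fix p assume "p \<in> set (coefs u)"
  obtain a v where p: "p = (a,v)" by (cases p)
  have "(\<Sum>(b, v')\<leftarrow>coefs w. cnj a * b * (if teq v v' then 1 else 0))
      = sum_list (map (\<lambda>x. cnj a * (\<lambda>(b,v'). if cl v' = cl v then b else 0) x) (coefs w))"
    by (intro arg_cong[where f=sum_list] map_cong refl) (auto simp: cl_eq teq_sym)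
  also have "\<dots> = cnj a * cf w (cl v)" by (simp add: sum_list_mult_const cf_def)
  finally show "(case p of (a, v) \<Rightarrow> \<Sum>(b, v')\<leftarrow>coefs w. cnj a * b * (if teq v v' then 1 else 0)) =
         (case p of (a, v) \<Rightarrow> cnj a * cf w (cl v))" by (simp add: p)
qed

lemma cnj_sl: "cnj (sum_list (map (\<lambda>(a,v). a * g v) xs)) = sum_list (map (\<lambda>(a,v). cnj a * cnj (g v)) xs)"
  by (induction xs) auto

lemma ipl_scal: "sum_list (map (\<lambda>(a,v). cnj a * cf (Scal c s) (cl v)) xs) = c * sum_list (map (\<lambda>(a,v). cnj a * cf s (cl v)) xs)"
  by (induction xs) (auto simp: algebra_simps)

lemma ipl_plus: "sum_list (map (\<lambda>(a,v). cnj a * cf (Plus s1 s2) (cl v)) xs) = sum_list (map (\<lambda>(a,v). cnj a * cf s1 (cl v)) xs) + sum_list (map (\<lambda>(a,v). cnj a * cf s2 (cl v)) xs)"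
  by (induction xs) (auto simp: algebra_simps)

lemma ipl_scal_l: "sum_list (map (\<lambda>(a,v). cnj a * g v) (map (\<lambda>(b,t). (c * b, t)) xs)) = cnj c * sum_list (map (\<lambda>(a,v). cnj a * g v) xs)"
  by (induction xs) (auto simp: algebra_simps)

lemma ip_sum:
  assumes A: "finite A" "\<And>Y. cf u Y \<noteq> 0 \<Longrightarrow> Y \<in> A"
  shows "ip u w = (\<Sum>Y\<in>A. cnj (cf u Y) * cf w Y)"
proof -
  define A0 where "A0 = cl ` snd ` set (coefs u)"
  have fA0: "finite A0" by (simp add: A0_def)
  have "ip u w = cnj (sum_list (map (\<lambda>(a,v). a * cnj (cf w (cl v))) (coefs u)))"
    unfolding ip_list cnj_sl by simp
  also have "sum_list (map (\<lambda>(a,v). a * cnj (cf w (cl v))) (coefs u)) = (\<Sum>Y\<in>A0. cf u Y * cnj (cf w Y))"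
    unfolding cf_def by (rule list_sum_classes) (auto simp: fA0 A0_def)
  also have "cnj \<dots> = (\<Sum>Y\<in>A0. cnj (cf u Y) * cf w Y)" by simp
  also have "\<dots> = (\<Sum>Y\<in>{Y\<in>A0. cf u Y \<noteq> 0}. cnj (cf u Y) * cf w Y)"
  proof (rule sum.mono_neutral_right)
    show "\<forall>i\<in>A0 - {Y \<in> A0. cf u Y \<noteq> 0}. cnj (cf u i) * cf w i = 0" by auto
  qed (auto simp: fA0)
  also have "\<dots> = (\<Sum>Y\<in>A. cnj (cf u Y) * cf w Y)"
  proof (rule sum.mono_neutral_left)
    show "{Y \<in> A0. cf u Y \<noteq> 0} \<subseteq> A" using A(2) by auto
    show "\<forall>i\<in>A - {Y \<in> A0. cf u Y \<noteq> 0}. cnj (cf u i) * cf w i = 0"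
      using cf_supp[of u] by (auto simp: A0_def)
  qed (auto simp: A)
  finally show ?thesis .
qed

lemma cf_fin: "finite {Y. cf u Y \<noteq> 0}"
  by (rule finite_subset[of _ "cl ` snd ` set (coefs u)"]) (auto dest: cf_supp)

lemma ip_cong: "cf u = cf u' \<Longrightarrow> cf w = cf w' \<Longrightarrow> ip u w = ip u' w'"
  using ip_sum[OF cf_fin, of u] ip_sum[OF cf_fin, of u'] by auto

lemma ip_sym: "ip u w = cnj (ip w u)"
proof -
  define A where "A = {Y. cf u Y \<noteq> 0} \<union> {Y. cf w Y \<noteq> 0}"
  have "finite A" by (simp add: A_def cf_fin)
  then show ?thesis using ip_sum[of A u w] ip_sum[of A w u] by (auto simp: A_def mult.commute)
qed

lemma ip_Plus_l: "ip (Plus a b) w = ip a w + ip b w" by (simp add: ip_list)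
lemma ip_Scal_l: "ip (Scal c a) w = cnj c * ip a w"
  unfolding ip_list coefs.simps by (rule ipl_scal_l)
lemma ip_Plus_r: "ip u (Plus a b) = ip u a + ip u b"
  unfolding ip_list by (rule ipl_plus)
lemma ip_Scal_r: "ip u (Scal c a) = c * ip u a"
  unfolding ip_list by (rule ipl_scal)
lemma ip_Zero_l: "ip Zero w = 0" by (simp add: ip_list)

section \<open>Pairs\<close>

lemma coefs_pairsp_aux1: "concat (map coefs (map (\<lambda>(b, v'). Scal (a * b) (Tm (Pair v v'))) ys)) = map (\<lambda>(b,v'). (a*b, Pair v v')) ys"
  by (induction ys) auto

lemma coefs_pairsp_aux: "coefs (sum_sp [Scal (a * b) (Tm (Pair v v')). (a, v) \<leftarrow> xs, (b, v') \<leftarrow> ys])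
   = concat (map (\<lambda>(a,v). map (\<lambda>(b,v'). (a*b, Pair v v')) ys) xs)"
  unfolding coefs_sum_sp
proof (induction xs)
  case (Cons p xs)
  then show ?case using coefs_pairsp_aux1[of "fst p" "snd p" ys] by (cases p) simp
qed simp

lemma coefs_pairsp: "coefs (pairsp u w) = concat (map (\<lambda>(a,v). map (\<lambda>(b,v'). (a*b, Pair v v')) (coefs w)) (coefs u))"
  unfolding pairsp_def by (rule coefs_pairsp_aux)

lemma dsum: "sum_list (map (\<lambda>(e,t). k e t) (concat (map (\<lambda>(a,v). map (\<lambda>(b,v'). (a*b, Pair v v')) ys) xs)))
  = sum_list (map (\<lambda>(a,v). sum_list (map (\<lambda>(b,v'). k (a*b) (Pair v v')) ys)) xs)"
proof (induction xs)
  case (Cons p xs)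
  have "sum_list (map (\<lambda>(e,t). k e t) (map (\<lambda>(b,v'). (fst p*b, Pair (snd p) v')) ys)) = sum_list (map (\<lambda>(b,v'). k (fst p*b) (Pair (snd p) v')) ys)"
    by (induction ys) auto
  then show ?case using Cons by (cases p) simp
qed simp

lemma sl_prod: "sum_list (map (\<lambda>(a,v). sum_list (map (\<lambda>(b,v'). f a v * g b v') ys)) xs)
  = sum_list (map (\<lambda>(a,v). f a v) xs) * sum_list (map (\<lambda>(b,v'). (g b v' :: complex)) ys)"
proof (induction xs)
  case (Cons p xs)
  have "sum_list (map (\<lambda>(b,v'). f (fst p) (snd p) * g b v') ys) = f (fst p) (snd p) * sum_list (map (\<lambda>(b,v'). g b v') ys)"
    by (induction ys) (auto simp: algebra_simps)
  then show ?case using Cons by (cases p) (simp add: algebra_simps)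
qed simp

lemma cf_pairsp_Pair: "cf (pairsp u w) (cl (Pair x y)) = cf u (cl x) * cf w (cl y)"
proof -
  have "cf (pairsp u w) (cl (Pair x y)) = sum_list (map (\<lambda>(a,v). sum_list (map (\<lambda>(b,v'). (if cl v = cl x then a else 0) * (if cl v' = cl y then b else 0)) (coefs w))) (coefs u))"
    unfolding cf_def coefs_pairsp dsum
    by (auto intro!: arg_cong[where f=sum_list] map_cong simp: cl_Pair)
  also have "\<dots> = cf u (cl x) * cf w (cl y)" unfolding sl_prod cf_def by simp
  finally show ?thesis .
qed

lemma ip_pairsp: "ip (pairsp a b) (pairsp c d) = ip a c * ip b d"
proof -
  have "ip (pairsp a b) (pairsp c d) = sum_list (map (\<lambda>(a1,v). sum_list (map (\<lambda>(b1,v'). (cnj a1 * cf c (cl v)) * (cnj b1 * cf d (cl v'))) (coefs b))) (coefs a))"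
    unfolding ip_list coefs_pairsp dsum
    by (auto intro!: arg_cong[where f=sum_list] map_cong simp: cf_pairsp_Pair algebra_simps)
  also have "\<dots> = ip a c * ip b d" unfolding sl_prod ip_list by simp
  finally show ?thesis .
qed

lemma bcoefs_pairsp: "is_value u \<Longrightarrow> is_value w \<Longrightarrow> bcoefs (pairsp u w)"
  unfolding bcoefs_def coefs_pairsp by (auto dest: value_coefs_basis)




fun BT :: "nat \<Rightarrow> tm set" where
  "BT 0 = {Ket0, Ket1}"
| "BT (Suc 0) = {Ket0, Ket1}"
| "BT (Suc (Suc m)) = {Pair K t | K t. K \<in> {Ket0, Ket1} \<and> t \<in> BT (Suc m)}"

lemma BT_props: "t \<in> BT m \<Longrightarrow> basis t \<and> closed_tm 0 t \<and> alg_tm t"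
  by (induction m arbitrary: t rule: BT.induct) auto

lemma pairsp_single: "coefs u = [(1,x)] \<Longrightarrow> coefs w = [(1,y)] \<Longrightarrow> pairsp u w = Plus (Scal 1 (Tm (Pair x y))) Zero"
  by (simp add: pairsp_def sum_sp_def)

lemma Bn_elem: "u \<in> sem (Bn m) \<tau> \<Longrightarrow> \<exists>t\<in>BT m. coefs u = [(1,t)] \<and> is_value u \<and> closed_sp 0 u \<and> alg_sp u"
proof (induction m arbitrary: u rule: Bn.induct)
  case 1 then show ?case by auto
next
  case 2 then show ?case by auto
next
  case (3 m)
  then obtain x y where u: "u = pairsp x y" "x \<in> {Tm Ket0, Tm Ket1}" "y \<in> sem (Bn (Suc m)) \<tau>" by auto
  obtain t where t: "t \<in> BT (Suc m)" "coefs y = [(1,t)]" using 3 u(3) by blast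
  obtain K where K: "K \<in> {Ket0, Ket1}" "x = Tm K" using u(2) by auto
  have "u = Plus (Scal 1 (Tm (Pair K t))) Zero" using u(1) K t by (simp add: pairsp_single)
  then show ?case using K t BT_props[OF t(1)] by (auto intro!: bexI[of _ "Pair K t"])
qed

lemma Bn_exists: "t \<in> BT m \<Longrightarrow> \<exists>u\<in>sem (Bn m) \<tau>. coefs u = [(1,t)]"
proof (induction m arbitrary: t rule: Bn.induct)
  case 1 then show ?case by auto
next
  case 2 then show ?case by auto
next
  case (3 m)
  then obtain K t' where t: "t = Pair K t'" "K \<in> {Ket0, Ket1}" "t' \<in> BT (Suc m)" by auto
  obtain y where y: "y \<in> sem (Bn (Suc m)) \<tau>" "coefs y = [(1,t')]" using 3 t(3) by blast
  have "pairsp (Tm K) y \<in> sem (Bn (Suc (Suc m))) \<tau>" using t(2) y(1) by auto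
  moreover have "coefs (pairsp (Tm K) y) = [(1,t)]" using y(2) t(1) by (simp add: pairsp_single)
  ultimately show ?case by blast
qed

lemma teq_Ket01: "\<not> teq Ket0 Ket1" using teq_Ket0 by blast

lemma BT_inj: "inj_on cl (BT m)"
proof (induction m rule: BT.induct)
  case 1 then show ?case by (auto simp: inj_on_def cl_eq dest: teq_Ket0 teq_Ket1)
next
  case 2 then show ?case by (auto simp: inj_on_def cl_eq dest: teq_Ket0 teq_Ket1)
next
  case (3 m)
  show ?case
  proof (rule inj_onI)
    fix a b assume "a \<in> BT (Suc (Suc m))" "b \<in> BT (Suc (Suc m))" "cl a = cl b"
    then obtain K t K' t' where ab: "a = Pair K t" "b = Pair K' t'" "K \<in> {Ket0,Ket1}" "K' \<in> {Ket0,Ket1}"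
      "t \<in> BT (Suc m)" "t' \<in> BT (Suc m)" "cl K = cl K'" "cl t = cl t'" by (auto simp: cl_Pair)
    have "K = K'" using ab(3,4,7) by (auto simp: cl_eq dest: teq_Ket0 teq_Ket1)
    moreover have "t = t'" using 3 ab(5,6,8) by (auto simp: inj_on_def)
    ultimately show "a = b" using ab by simp
  qed
qed

lemma BT_card: "card (BT (Suc m)) = 2 ^ Suc m \<and> finite (BT (Suc m))"
proof (induction m)
  case 0 then show ?case by simp
next
  case (Suc m)
  have e: "BT (Suc (Suc m)) = (\<lambda>(K,t). Pair K t) ` ({Ket0, Ket1} \<times> BT (Suc m))" by auto
  have inj: "inj_on (\<lambda>(K,t). Pair K t) ({Ket0, Ket1} \<times> BT (Suc m))" by (auto simp: inj_on_def)
  show ?case using Suc unfolding e by (simp add: card_image[OF inj] card_cartesian_product)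
qed

lemma clBT_card: "card (cl ` BT (Suc m)) = 2 ^ Suc m" "finite (cl ` BT (Suc m))"
  using BT_card[of m] card_image[OF BT_inj[of "Suc m"]] by auto

lemma span_supp: "v \<in> span (sem (Bn m) \<tau>) \<Longrightarrow> cf v Y \<noteq> 0 \<Longrightarrow> Y \<in> cl ` BT m"
proof (induction rule: span.induct)
  case span_zero then show ?case by simp
next
  case (span_gen u a)
  then obtain t where "t \<in> BT m" "coefs u = [(1,t)]" using Bn_elem by blast
  then have "cf u Y = (if cl t = Y then 1 else 0)" by (simp add: cf_def)
  then show ?case using span_gen \<open>t \<in> BT m\<close> by (auto split: if_splits)
next
  case (span_plus u w) then show ?case by (cases "cf u Y = 0") auto
qed

lemma ip_self: "\<exists>r. ip v v = complex_of_real r \<and> r \<ge> 0"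
proof -
  have "ip v v = (\<Sum>Y\<in>{Y. cf v Y \<noteq> 0}. cnj (cf v Y) * cf v Y)" by (rule ip_sum) (auto simp: cf_fin)
  also have "\<dots> = complex_of_real (\<Sum>Y\<in>{Y. cf v Y \<noteq> 0}. (cmod (cf v Y))^2)"
  proof -
    have e: "cnj z * z = complex_of_real ((cmod z)^2)" for z by (metis complex_norm_square mult.commute)
    show ?thesis unfolding e of_real_sum by simp
  qed
  finally show ?thesis by (intro exI[of _ "\<Sum>Y\<in>{Y. cf v Y \<noteq> 0}. (cmod (cf v Y))^2"]) (auto intro: sum_nonneg)
qed

lemma S1_ip: "v \<in> S1 \<Longrightarrow> ip v v = 1"
proof -
  assume "v \<in> S1"
  then have h: "(cmod (ip v v))^2 = 1" by (simp add: S1_def)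
  obtain r where r: "ip v v = complex_of_real r" "r \<ge> 0" using ip_self by blast
  then have "r^2 = 1" using h by simp
  then have "r = 1" using r(2) using power2_eq_1_iff[of r] r(2) by auto
  then show ?thesis using r by simp
qed




lemma cnj_mult_self: "cnj z * z = complex_of_real ((cmod z)^2)"
  by (metis complex_norm_square mult.commute)

lemma bessel_card:
  fixes f :: "'i \<Rightarrow> 'd \<Rightarrow> complex"
  assumes fI: "finite I" and fD: "finite D"
    and orth: "\<And>i j. i \<in> I \<Longrightarrow> j \<in> I \<Longrightarrow> (\<Sum>Y\<in>D. cnj (f i Y) * f j Y) = (if i = j then 1 else 0)"
  shows "card I \<le> card D"
proof -
  define S where "S d = (\<Sum>i\<in>I. (cmod (f i d))^2)" for d
  have Sle: "S d \<le> 1" if dD: "d \<in> D" for d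
  proof -
    define u where "u Y = (\<Sum>i\<in>I. cnj (f i d) * f i Y)" for Y
    have ud: "u d = complex_of_real (S d)"
      unfolding u_def S_def of_real_sum by (simp add: cnj_mult_self)
    have "(\<Sum>Y\<in>D. cnj (u Y) * u Y) = (\<Sum>Y\<in>D. \<Sum>i\<in>I. \<Sum>j\<in>I. (f j d * cnj (f i d)) * (cnj (f j Y) * f i Y))"
      unfolding u_def by (simp add: sum_product algebra_simps)
    also have "\<dots> = (\<Sum>i\<in>I. \<Sum>j\<in>I. (f j d * cnj (f i d)) * (\<Sum>Y\<in>D. cnj (f j Y) * f i Y))"
      by (simp add: sum_distrib_left sum.swap[of _ D])
    also have "\<dots> = (\<Sum>i\<in>I. \<Sum>j\<in>I. if i = j then f j d * cnj (f i d) else 0)"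
      using orth by (intro sum.cong refl) auto
    also have "\<dots> = (\<Sum>i\<in>I. f i d * cnj (f i d))" using fI by simp
    also have "\<dots> = complex_of_real (S d)"
      unfolding S_def of_real_sum by (intro sum.cong refl) (metis complex_norm_square)
    finally have "(\<Sum>Y\<in>D. cnj (u Y) * u Y) = complex_of_real (S d)" .
    then have "complex_of_real (\<Sum>Y\<in>D. (cmod (u Y))^2) = complex_of_real (S d)"
      by (simp only: of_real_sum cnj_mult_self)
    then have uu: "(\<Sum>Y\<in>D. (cmod (u Y))^2) = S d" using of_real_eq_iff by blast
    have "(cmod (u d))^2 \<le> (\<Sum>Y\<in>D. (cmod (u Y))^2)"
      by (rule member_le_sum) (use dD fD in auto)
    moreover have "S d \<ge> 0" by (simp add: S_def sum_nonneg)
    moreover have "cmod (u d) = S d" using ud \<open>S d \<ge> 0\<close> by simp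
    ultimately have "(S d)^2 \<le> S d" using uu by simp
    moreover have "S d \<ge> 0" by (simp add: S_def sum_nonneg)
    ultimately show "S d \<le> 1"
    proof (rule_tac ccontr)
      assume h: "(S d)^2 \<le> S d" "S d \<ge> 0" "\<not> S d \<le> 1"
      then have "S d * 1 < S d * S d" by (intro mult_strict_left_mono) auto
      then show False using h by (simp add: power2_eq_square)
    qed
  qed
  have one: "(\<Sum>Y\<in>D. (cmod (f i Y))^2) = 1" if "i \<in> I" for i
  proof -
    have "complex_of_real (\<Sum>Y\<in>D. (cmod (f i Y))^2) = 1"
      using orth[OF that that] unfolding of_real_sum by (simp add: cnj_mult_self)
    then show ?thesis using of_real_eq_1_iff by blast
  qed
  have "real (card I) = (\<Sum>i\<in>I. \<Sum>Y\<in>D. (cmod (f i Y))^2)" using one by simp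
  also have "\<dots> = (\<Sum>Y\<in>D. S Y)" unfolding S_def by (rule sum.swap)
  also have "\<dots> \<le> (\<Sum>Y\<in>D. 1)" by (rule sum_mono) (use Sle in auto)
  finally show ?thesis by simp
qed

definition dep :: "('d \<Rightarrow> complex) \<Rightarrow> ('d \<Rightarrow> complex) \<Rightarrow> bool" where
  "dep f g \<longleftrightarrow> (\<forall>Y Y'. f Y * g Y' = g Y * f Y')"

lemma dep_refl: "dep f f" by (simp add: dep_def mult.commute)
lemma dep_sym: "dep f g \<Longrightarrow> dep g f" unfolding dep_def by (metis mult.commute)
lemma dep_trans: assumes "dep f g" "dep g h" "g Z \<noteq> 0" shows "dep f h"
  unfolding dep_def
proof (intro allI)
  fix X X'
  have a: "f X * g Z = g X * f Z" "f X' * g Z = g X' * f Z" using assms(1) unfolding dep_def by auto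
  have b: "g Z * h X' = h Z * g X'" "g Z * h X = h Z * g X" using assms(2) unfolding dep_def by auto
  have "(f X * h X') * (g Z * g Z) = (f X * g Z) * (g Z * h X')" by (simp add: algebra_simps)
  also have "\<dots> = (g X * f Z) * (h Z * g X')" using a b by simp
  also have "\<dots> = (f X' * g Z) * (g Z * h X)" using a b by (simp add: algebra_simps)
  also have "\<dots> = (h X * f X') * (g Z * g Z)" by (simp add: algebra_simps)
  finally show "f X * h X' = h X * f X'" using assms(3) by simp
qed

lemma dep_cs:
  assumes "dep f g"
  shows "(\<Sum>Y\<in>D. cnj (f Y) * g Y) * cnj (\<Sum>Y\<in>D. cnj (f Y) * g Y)
       = (\<Sum>Y\<in>D. cnj (f Y) * f Y) * (\<Sum>Y\<in>D. cnj (g Y) * g Y)"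
proof -
  have "(\<Sum>Y\<in>D. cnj (f Y) * g Y) * cnj (\<Sum>Y\<in>D. cnj (f Y) * g Y)
      = (\<Sum>Y\<in>D. \<Sum>Y'\<in>D. cnj (f Y') * (g Y' * f Y) * cnj (g Y))"
    by (simp add: sum_product algebra_simps)
  also have "\<dots> = (\<Sum>Y\<in>D. \<Sum>Y'\<in>D. cnj (f Y') * (f Y' * g Y) * cnj (g Y))"
    using assms unfolding dep_def by simp
  also have "\<dots> = (\<Sum>Y'\<in>D. \<Sum>Y\<in>D. cnj (f Y') * (f Y' * g Y) * cnj (g Y))"
    by (rule sum.swap)
  also have "\<dots> = (\<Sum>Y\<in>D. cnj (f Y) * f Y) * (\<Sum>Y\<in>D. cnj (g Y) * g Y)"
    by (simp add: sum_product algebra_simps)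
  finally show ?thesis .
qed

lemma two_equiv:
  assumes "\<And>i. i \<in> I \<Longrightarrow> P i i" "\<And>i j. i \<in> I \<Longrightarrow> j \<in> I \<Longrightarrow> P i j \<Longrightarrow> P j i"
    "\<And>i j k. i \<in> I \<Longrightarrow> j \<in> I \<Longrightarrow> k \<in> I \<Longrightarrow> P i j \<Longrightarrow> P j k \<Longrightarrow> P i k"
    "\<And>i. i \<in> I \<Longrightarrow> Q i i" "\<And>i j. i \<in> I \<Longrightarrow> j \<in> I \<Longrightarrow> Q i j \<Longrightarrow> Q j i"
    "\<And>i j k. i \<in> I \<Longrightarrow> j \<in> I \<Longrightarrow> k \<in> I \<Longrightarrow> Q i j \<Longrightarrow> Q j k \<Longrightarrow> Q i k"
    "\<And>i j. i \<in> I \<Longrightarrow> j \<in> I \<Longrightarrow> P i j \<or> Q i j"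
  shows "(\<forall>i\<in>I. \<forall>j\<in>I. P i j) \<or> (\<forall>i\<in>I. \<forall>j\<in>I. Q i j)"
proof (rule ccontr)
  assume "\<not> ?thesis"
  then obtain a b c d where abcd: "a \<in> I" "b \<in> I" "c \<in> I" "d \<in> I" "\<not> P a b" "\<not> Q c d" by blast
  then have "Q a b" "P c d" using assms(7) by blast+
  show False
  proof (cases "P a c")
    case True
    then have "P a d" using assms(3) abcd \<open>P c d\<close> by blast
    have "\<not> P b c" using assms(2,3) abcd True by blast
    then have "Q b c" using assms(7) abcd by blast
    have "\<not> P b d" using assms(2,3) abcd \<open>P a d\<close> by blast
    then have "Q b d" using assms(7) abcd by blast
    then show False using assms(5,6) abcd \<open>Q b c\<close> by blast
  next
    case False
    then have "Q a c" using assms(7) abcd by blast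
    have "\<not> P a d" using assms(2,3) abcd False \<open>P c d\<close> by blast
    then have "Q a d" using assms(7) abcd by blast
    then show False using assms(5,6) abcd \<open>Q a c\<close> by blast
  qed
qed




lemma ip_single: "coefs u = [(1,t)] \<Longrightarrow> coefs u' = [(1,t')] \<Longrightarrow> ip u u' = (if teq t t' then 1 else 0)"
  by (simp add: ip_def)

lemma inS2:
  assumes u: "u \<in> sem (Bn m) \<tau>" "coefs u = [(1,t)]" and u': "u' \<in> sem (Bn m) \<tau>" "coefs u' = [(1,t')]"
   and nt: "\<not> teq t t'" and al: "algebraic \<alpha>" "algebraic \<beta>" and nrm: "cnj \<alpha> * \<alpha> + cnj \<beta> * \<beta> = 1"
  shows "Plus (Scal \<alpha> u) (Scal \<beta> u') \<in> sem (Sharp (Bn m)) \<tau>"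
proof -
  have sp: "Plus (Scal \<alpha> u) (Scal \<beta> u') \<in> span (sem (Bn m) \<tau>)"
    by (intro span_plus span_gen u(1) u'(1))
  have v: "is_value u \<and> closed_sp 0 u \<and> alg_sp u" "is_value u' \<and> closed_sp 0 u' \<and> alg_sp u'"
    using Bn_elem[OF u(1)] Bn_elem[OF u'(1)] by auto
  have nt': "\<not> teq t' t" using nt teq_sym by blast
  have "ip (Plus (Scal \<alpha> u) (Scal \<beta> u')) (Plus (Scal \<alpha> u) (Scal \<beta> u')) = cnj \<alpha> * \<alpha> + cnj \<beta> * \<beta>"
    by (simp add: ip_Plus_l ip_Plus_r ip_Scal_l ip_Scal_r ip_single[OF u(2) u(2)] ip_single[OF u(2) u'(2)]
        ip_single[OF u'(2) u(2)] ip_single[OF u'(2) u'(2)] teq_refl nt nt')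
  then show ?thesis using sp v al nrm by (simp add: S1_def)
qed

lemma inS1:
  assumes u: "u \<in> sem (Bn m) \<tau>" "coefs u = [(1,t)]"
  shows "Scal 1 u \<in> sem (Sharp (Bn m)) \<tau>"
proof -
  have sp: "Scal 1 u \<in> span (sem (Bn m) \<tau>)" by (intro span_gen u(1))
  have v: "is_value u \<and> closed_sp 0 u \<and> alg_sp u" using Bn_elem[OF u(1)] by auto
  have "ip (Scal 1 u) (Scal 1 u) = 1" by (simp add: ip_Scal_l ip_Scal_r ip_single[OF u(2) u(2)] teq_refl)
  then show ?thesis using sp v by (simp add: S1_def)
qed

lemma sharp_S1: "v \<in> sem (Sharp A) \<tau> \<Longrightarrow> v \<in> S1" by simp

lemma S1_value: "v \<in> S1 \<Longrightarrow> is_value v" by (simp add: S1_def)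

lemma alg45i: "algebraic (4 * \<i> / 5)"
proof (rule algebraicI'[of "[:16, 0, 25:]"])
  show "\<And>i. coeff [:16, 0, 25:] i \<in> \<rat>" by (simp add: coeff_pCons split: nat.splits)
  show "[:16, 0, 25:] \<noteq> (0::complex poly)" by simp
  show "poly [:16, 0, 25:] (4 * \<i> / 5) = 0" by (simp add: algebra_simps power2_eq_square)
qed

lemma alg_frac: "algebraic (3/5 :: complex)" "algebraic (4/5 :: complex)"
  by (simp_all add: rat_imp_algebraic)

lemma dep_lift:
  assumes "\<And>x x'. f (cl x) * g (cl x') = g (cl x) * f (cl x')"
    "\<And>Y. f Y \<noteq> 0 \<Longrightarrow> \<exists>x. Y = cl x" "\<And>Y. g Y \<noteq> 0 \<Longrightarrow> \<exists>x. Y = cl x"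
  shows "dep f g"
  unfolding dep_def
proof (intro allI)
  fix Y Y'
  show "f Y * g Y' = g Y * f Y'"
  proof (cases "\<exists>x. Y = cl x")
    case True
    then obtain x where x: "Y = cl x" by blast
    show ?thesis
    proof (cases "\<exists>x'. Y' = cl x'")
      case True then show ?thesis using x assms(1) by blast
    next
      case False then show ?thesis using assms(2,3) by force
    qed
  next
    case False then show ?thesis using assms(2,3) by force
  qed
qed

lemma cf_cls: "cf v Y \<noteq> 0 \<Longrightarrow> \<exists>x. Y = cl x" using cf_supp by blast

lemma ip_dep_nz:
  assumes "dep (cf p) (cf p')" "ip p p = 1" "ip p' p' = 1"
  shows "ip p p' \<noteq> 0"
proof -
  define D where "D = {Y. cf p Y \<noteq> 0} \<union> {Y. cf p' Y \<noteq> 0}"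
  have fD: "finite D" by (simp add: D_def cf_fin)
  have e: "ip q q' = (\<Sum>Y\<in>D. cnj (cf q Y) * cf q' Y)" if "q \<in> {p,p'}" for q q'
    by (rule ip_sum) (use that fD in \<open>auto simp: D_def\<close>)
  have "ip p p' * cnj (ip p p') = ip p p * ip p' p'"
    using dep_cs[OF assms(1), of D] e[of p p'] e[of p p] e[of p' p'] by simp
  then show ?thesis using assms by auto
qed

lemma ip_nz_ex: "ip p p = 1 \<Longrightarrow> \<exists>Z. cf p Z \<noteq> 0"
  using ip_sum[of "{}" p p] by auto




lemma zlem:
  fixes z :: complex
  assumes "(3/5)*(3/5) + (3/5)*(4/5)*z + (4/5)*(3/5)*cnj z + (4/5)*(4/5) = 1"
    "(3/5)*(3/5) + (3/5)*(4*\<i>/5)*z + cnj (4*\<i>/5)*(3/5)*cnj z + cnj (4*\<i>/5)*(4*\<i>/5) = 1"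
  shows "z = 0"
  using assms by (simp add: complex_eq_iff algebra_simps)

lemma minor:
  fixes a b a' b' p p' q q' P P' Q Q' :: complex
  assumes "a * b = 3/5 * p * q + 4/5 * P * Q"
    "a' * b' = 3/5 * p' * q' + 4/5 * P' * Q'"
    "a * b' = 3/5 * p * q' + 4/5 * P * Q'"
    "a' * b = 3/5 * p' * q + 4/5 * P' * Q"
  shows "(p * P' - P * p') * (q * Q' - Q * q') = 0"
proof -
  have "(a * b) * (a' * b') - (a * b') * (a' * b) = 0" by (simp add: algebra_simps)
  then have "(3/5 * p * q + 4/5 * P * Q) * (3/5 * p' * q' + 4/5 * P' * Q') - (3/5 * p * q' + 4/5 * P * Q') * (3/5 * p' * q + 4/5 * P' * Q) = 0"
    using assms by simp
  then have "12/25 * ((p * P' - P * p') * (q * Q' - Q * q')) = 0" by (simp add: algebra_simps)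
  then show ?thesis by simp
qed




lemma zlem2:
  fixes z :: complex
  assumes "\<And>\<beta>. \<beta> = 4/5 \<or> \<beta> = 4*\<i>/5 \<Longrightarrow> (3/5)*(3/5) + (3/5)*\<beta>*z + cnj \<beta>*(3/5)*cnj z + cnj \<beta>*\<beta> = 1"
  shows "z = 0"
  using assms[of "4/5"] assms[of "4*\<i>/5"] by (simp add: complex_eq_iff algebra_simps)

lemma bessel_app:
  assumes "finite I" "\<And>t. t \<in> I \<Longrightarrow> F t \<in> span (sem (Bn m) \<tau>)"
    "\<And>t t'. t \<in> I \<Longrightarrow> t' \<in> I \<Longrightarrow> ip (F t) (F t') = (if t = t' then 1 else 0)" "m \<ge> 1"
  shows "card I \<le> 2^m"
proof -
  obtain m' where m': "m = Suc m'" using assms(4) by (cases m) auto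
  have fD: "finite (cl ` BT m)" and cD: "card (cl ` BT m) = 2^m" using clBT_card[of m'] m' by auto
  have "card I \<le> card (cl ` BT m)"
  proof (rule bessel_card[OF assms(1) fD])
    fix i j assume ij: "i \<in> I" "j \<in> I"
    have "ip (F i) (F j) = (\<Sum>Y\<in>cl ` BT m. cnj (cf (F i) Y) * cf (F j) Y)"
      by (rule ip_sum[OF fD]) (use span_supp assms(2)[OF ij(1)] in blast)
    then show "(\<Sum>Y\<in>cl ` BT m. cnj (cf (F i) Y) * cf (F j) Y) = (if i = j then 1 else 0)"
      using assms(3)[OF ij] by simp
  qed
  then show ?thesis using cD by simp
qed

context
  fixes b :: sp and n k :: nat
  assumes nk: "n \<ge> 1" "k \<ge> 1"
    and inh: "Tm (Lam b) \<in> sem (Lolli (Sharp (Bn (n + k))) (Prod (Sharp (Bn n)) (Sharp (Bn k)))) empty_env"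
begin

lemma out:
  assumes "s \<in> sem (Sharp (Bn (n+k))) empty_env"
  shows "\<exists>m V W. V \<in> sem (Sharp (Bn n)) empty_env \<and> W \<in> sem (Sharp (Bn k)) empty_env \<and>
     cf ((stepsp^^m) (spmap (App (Lam b)) s)) = cf (pairsp V W)"
proof -
  have R: "spmap (App (Lam b)) s \<turnstile>r sem (Prod (Sharp (Bn n)) (Sharp (Bn k))) empty_env"
    using inh assms by auto
  then obtain w w' where w: "sreds (spmap (App (Lam b)) s) w" "speq w w'"
    "w' \<in> sem (Prod (Sharp (Bn n)) (Sharp (Bn k))) empty_env" unfolding realizes_def by blast
  then obtain V W where VW: "w' = pairsp V W" "V \<in> sem (Sharp (Bn n)) empty_env" "W \<in> sem (Sharp (Bn k)) empty_env"
    by auto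
  obtain m where "cf w = cf ((stepsp^^m) (spmap (App (Lam b)) s))" using sreds_step[OF w(1)] by blast
  then show ?thesis using speq_cf[OF w(2)] VW by metis
qed

definition uu :: "tm \<Rightarrow> sp" where
  "uu t = (SOME u. u \<in> sem (Bn (n+k)) empty_env \<and> coefs u = [(1,t)])"

lemma uu: "t \<in> BT (n+k) \<Longrightarrow> uu t \<in> sem (Bn (n+k)) empty_env \<and> coefs (uu t) = [(1,t)]"
  unfolding uu_def by (rule someI_ex) (use Bn_exists in blast)

definition Ai :: "tm \<Rightarrow> sp" where "Ai t = spmap (App (Lam b)) (uu t)"

definition goodb where "goodb t x \<longleftrightarrow> fst (snd x) \<in> sem (Sharp (Bn n)) empty_env \<and> snd (snd x) \<in> sem (Sharp (Bn k)) empty_env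
   \<and> (\<forall>M\<ge>fst x. cf ((stepsp^^M) (Ai t)) = cf (pairsp (fst (snd x)) (snd (snd x))))"

lemma basis_out: assumes "t \<in> BT (n+k)" shows "\<exists>x. goodb t x"
proof -
  have "Scal 1 (uu t) \<in> sem (Sharp (Bn (n+k))) empty_env" using uu[OF assms] inS1 by blast
  from out[OF this] obtain m V W where h: "V \<in> sem (Sharp (Bn n)) empty_env" "W \<in> sem (Sharp (Bn k)) empty_env"
    "cf ((stepsp^^m) (Scal 1 (Ai t))) = cf (pairsp V W)" by (auto simp: Ai_def)
  have "cf (Scal 1 (Ai t)) = cf (Ai t)" by (auto intro!: ext)
  then have m: "cf ((stepsp^^m) (Ai t)) = cf (pairsp V W)" using stepsp_iter_cong h(3) by metis
  have bc: "bcoefs (pairsp V W)" using h(1,2) by (intro bcoefs_pairsp) (auto simp: S1_def)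
  have "\<forall>M\<ge>m. cf ((stepsp^^M) (Ai t)) = cf (pairsp V W)" using iter_after[OF m bc] by blast
  then show ?thesis using h unfolding goodb_def by (intro exI[of _ "(m, V, W)"]) auto
qed

definition bo where "bo t = (SOME x. goodb t x)"
definition Pv where "Pv t = fst (snd (bo t))"
definition Qv where "Qv t = snd (snd (bo t))"
definition Mi where "Mi t = fst (bo t)"

lemma bo: assumes "t \<in> BT (n+k)"
  shows "Pv t \<in> sem (Sharp (Bn n)) empty_env" "Qv t \<in> sem (Sharp (Bn k)) empty_env"
    "\<And>M. M \<ge> Mi t \<Longrightarrow> cf ((stepsp^^M) (Ai t)) = cf (pairsp (Pv t) (Qv t))"
proof -
  have "goodb t (bo t)" unfolding bo_def by (rule someI_ex) (rule basis_out[OF assms])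
  then show "Pv t \<in> sem (Sharp (Bn n)) empty_env" "Qv t \<in> sem (Sharp (Bn k)) empty_env"
    "\<And>M. M \<ge> Mi t \<Longrightarrow> cf ((stepsp^^M) (Ai t)) = cf (pairsp (Pv t) (Qv t))"
    unfolding goodb_def Pv_def Qv_def Mi_def by auto
qed

lemma BT_nteq: "t \<in> BT m \<Longrightarrow> t' \<in> BT m \<Longrightarrow> t \<noteq> t' \<Longrightarrow> \<not> teq t t'"
  using BT_inj[of m] by (auto simp: inj_on_def cl_eq[symmetric])

lemma pair_out:
  assumes t: "t \<in> BT (n+k)" "t' \<in> BT (n+k)" "t \<noteq> t'" and \<beta>: "\<beta> = 4/5 \<or> \<beta> = 4*\<i>/5"
  shows "\<exists>V W. V \<in> sem (Sharp (Bn n)) empty_env \<and> W \<in> sem (Sharp (Bn k)) empty_env \<and>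
     (\<forall>X. cf (pairsp V W) X = 3/5 * cf (pairsp (Pv t) (Qv t)) X + \<beta> * cf (pairsp (Pv t') (Qv t')) X)"
proof -
  have alg: "algebraic \<beta>" using \<beta> alg_frac(2) alg45i by metis
  have nrm: "cnj (3/5) * (3/5) + cnj \<beta> * \<beta> = 1"
  proof (cases "\<beta> = 4/5")
    case True show ?thesis unfolding True by simp
  next
    case False then have "\<beta> = 4*\<i>/5" using \<beta> by blast
    then show ?thesis by (simp only:) (simp add: algebra_simps)
  qed
  have "Plus (Scal (3/5) (uu t)) (Scal \<beta> (uu t')) \<in> sem (Sharp (Bn (n+k))) empty_env"
    using uu[OF t(1)] uu[OF t(2)] BT_nteq[OF t] alg alg_frac nrm by (intro inS2) auto
  from out[OF this] obtain m V W where h: "V \<in> sem (Sharp (Bn n)) empty_env" "W \<in> sem (Sharp (Bn k)) empty_env"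
    "cf ((stepsp^^m) (Plus (Scal (3/5) (Ai t)) (Scal \<beta> (Ai t')))) = cf (pairsp V W)" by (auto simp: Ai_def)
  have bc: "bcoefs (pairsp V W)" using h(1,2) by (intro bcoefs_pairsp) (auto simp: S1_def)
  define M where "M = max m (max (Mi t) (Mi t'))"
  have "cf ((stepsp^^M) (Plus (Scal (3/5) (Ai t)) (Scal \<beta> (Ai t')))) = cf (pairsp V W)"
    by (rule iter_after[OF h(3) bc]) (simp add: M_def)
  moreover have "cf ((stepsp^^M) (Ai t)) = cf (pairsp (Pv t) (Qv t))" by (rule bo(3)[OF t(1)]) (simp add: M_def)
  moreover have "cf ((stepsp^^M) (Ai t')) = cf (pairsp (Pv t') (Qv t'))" by (rule bo(3)[OF t(2)]) (simp add: M_def)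
  ultimately show ?thesis using h(1,2) iter_lin by metis
qed

lemma contra: False
proof -
  define I where "I = BT (n+k)"
  obtain m0 where m0: "n + k = Suc m0" using nk by (cases "n+k") auto
  have fI: "finite I" and cI: "card I = 2^(n+k)" using BT_card[of m0] m0 by (auto simp: I_def)
  define p where "p t = cf (Pv t)" for t
  define q where "q t = cf (Qv t)" for t
  have unitP: "ip (Pv t) (Pv t) = 1" if "t \<in> I" for t using bo(1)[of t] that by (intro S1_ip) (auto simp: I_def)
  have unitQ: "ip (Qv t) (Qv t) = 1" if "t \<in> I" for t using bo(2)[of t] that by (intro S1_ip) (auto simp: I_def)
  have spP: "Pv t \<in> span (sem (Bn n) empty_env)" if "t \<in> I" for t using bo(1)[of t] that by (auto simp: I_def)
  have spQ: "Qv t \<in> span (sem (Bn k) empty_env)" if "t \<in> I" for t using bo(2)[of t] that by (auto simp: I_def)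
  have orth: "ip (Pv t) (Pv t') * ip (Qv t) (Qv t') = 0" if tt: "t \<in> I" "t' \<in> I" "t \<noteq> t'" for t t'
  proof -
    define z where "z = ip (pairsp (Pv t) (Qv t)) (pairsp (Pv t') (Qv t'))"
    have "(3/5)*(3/5) + (3/5)*\<beta>*z + cnj \<beta>*(3/5)*cnj z + cnj \<beta>*\<beta> = 1" if \<beta>: "\<beta> = 4/5 \<or> \<beta> = 4*\<i>/5" for \<beta>
    proof -
      obtain V W where VW: "V \<in> sem (Sharp (Bn n)) empty_env" "W \<in> sem (Sharp (Bn k)) empty_env"
        "\<forall>X. cf (pairsp V W) X = 3/5 * cf (pairsp (Pv t) (Qv t)) X + \<beta> * cf (pairsp (Pv t') (Qv t')) X"
        using pair_out[of t t' \<beta>] tt \<beta> by (auto simp: I_def)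
      have "ip (pairsp V W) (pairsp V W) = 1" using VW(1,2) by (simp add: ip_pairsp S1_ip)
      moreover have "cf (pairsp V W) = cf (Plus (Scal (3/5) (pairsp (Pv t) (Qv t))) (Scal \<beta> (pairsp (Pv t') (Qv t'))))"
        using VW(3) by (auto intro!: ext)
      ultimately have "ip (Plus (Scal (3/5) (pairsp (Pv t) (Qv t))) (Scal \<beta> (pairsp (Pv t') (Qv t'))))
                           (Plus (Scal (3/5) (pairsp (Pv t) (Qv t))) (Scal \<beta> (pairsp (Pv t') (Qv t')))) = 1"
        using ip_cong by metis
      moreover have "ip (pairsp (Pv t') (Qv t')) (pairsp (Pv t) (Qv t)) = cnj z" unfolding z_def by (rule ip_sym)
      moreover have "ip (pairsp (Pv t) (Qv t)) (pairsp (Pv t) (Qv t)) = 1" using unitP unitQ tt by (simp add: ip_pairsp)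
      moreover have "ip (pairsp (Pv t') (Qv t')) (pairsp (Pv t') (Qv t')) = 1" using unitP unitQ tt by (simp add: ip_pairsp)
      ultimately show ?thesis by (simp add: ip_Plus_l ip_Plus_r ip_Scal_l ip_Scal_r z_def[symmetric] algebra_simps)
    qed
    then have "z = 0" by (rule zlem2)
    then show ?thesis by (simp add: z_def ip_pairsp)
  qed
  have dpq: "dep (p t) (p t') \<or> dep (q t) (q t')" if tt: "t \<in> I" "t' \<in> I" "t \<noteq> t'" for t t'
  proof -
    obtain V W where VW: "\<forall>X. cf (pairsp V W) X = 3/5 * cf (pairsp (Pv t) (Qv t)) X + 4/5 * cf (pairsp (Pv t') (Qv t')) X"
      using pair_out[of t t' "4/5"] tt by (auto simp: I_def)
    have e: "cf V (cl x) * cf W (cl y) = 3/5 * p t (cl x) * q t (cl y) + 4/5 * p t' (cl x) * q t' (cl y)" for x y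
      using VW[rule_format, of "cl (Pair x y)"] by (simp add: cf_pairsp_Pair p_def q_def algebra_simps)
    have mn: "(p t (cl x) * p t' (cl x') - p t' (cl x) * p t (cl x')) * (q t (cl y) * q t' (cl y') - q t' (cl y) * q t (cl y')) = 0" for x x' y y'
      by (rule minor[OF e e e e])
    show ?thesis
    proof (cases "\<forall>x x'. p t (cl x) * p t' (cl x') - p t' (cl x) * p t (cl x') = 0")
      case True
      then have "dep (p t) (p t')" by (intro dep_lift) (auto simp: p_def dest: cf_cls)
      then show ?thesis by blast
    next
      case False
      then obtain x x' where "p t (cl x) * p t' (cl x') - p t' (cl x) * p t (cl x') \<noteq> 0" by blast
      then have "\<forall>y y'. q t (cl y) * q t' (cl y') - q t' (cl y) * q t (cl y') = 0" using mn[of x x'] by simp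
      then have "dep (q t) (q t')" by (intro dep_lift) (auto simp: q_def dest: cf_cls)
      then show ?thesis by blast
    qed
  qed
  have nzP: "\<exists>Z. p t Z \<noteq> 0" if "t \<in> I" for t using ip_nz_ex[OF unitP[OF that]] by (simp add: p_def)
  have nzQ: "\<exists>Z. q t Z \<noteq> 0" if "t \<in> I" for t using ip_nz_ex[OF unitQ[OF that]] by (simp add: q_def)
  have all: "(\<forall>i\<in>I. \<forall>j\<in>I. dep (p i) (p j)) \<or> (\<forall>i\<in>I. \<forall>j\<in>I. dep (q i) (q j))"
  proof (rule two_equiv)
    show "\<And>i j k. i \<in> I \<Longrightarrow> j \<in> I \<Longrightarrow> k \<in> I \<Longrightarrow> dep (p i) (p j) \<Longrightarrow> dep (p j) (p k) \<Longrightarrow> dep (p i) (p k)"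
      using nzP dep_trans by metis
    show "\<And>i j k. i \<in> I \<Longrightarrow> j \<in> I \<Longrightarrow> k \<in> I \<Longrightarrow> dep (q i) (q j) \<Longrightarrow> dep (q j) (q k) \<Longrightarrow> dep (q i) (q k)"
      using nzQ dep_trans by metis
    show "\<And>i j. i \<in> I \<Longrightarrow> j \<in> I \<Longrightarrow> dep (p i) (p j) \<or> dep (q i) (q j)"
      using dpq dep_refl by metis
  qed (auto intro: dep_refl dep_sym)
  then show False
  proof
    assume allP: "\<forall>i\<in>I. \<forall>j\<in>I. dep (p i) (p j)"
    have "card I \<le> 2^k"
    proof (rule bessel_app[OF fI spQ _ nk(2)])
      fix t t' assume tt: "t \<in> I" "t' \<in> I"
      show "ip (Qv t) (Qv t') = (if t = t' then 1 else 0)"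
      proof (cases "t = t'")
        case True then show ?thesis using unitQ tt by simp
      next
        case False
        have "ip (Pv t) (Pv t') \<noteq> 0" using allP tt unitP by (intro ip_dep_nz) (auto simp: p_def)
        then show ?thesis using orth[OF tt False] False by simp
      qed
    qed
    moreover have "2^k < (2::nat)^(n+k)" using nk by simp
    ultimately show False using cI by simp
  next
    assume allQ: "\<forall>i\<in>I. \<forall>j\<in>I. dep (q i) (q j)"
    have "card I \<le> 2^n"
    proof (rule bessel_app[OF fI spP _ nk(1)])
      fix t t' assume tt: "t \<in> I" "t' \<in> I"
      show "ip (Pv t) (Pv t') = (if t = t' then 1 else 0)"
      proof (cases "t = t'")
        case True then show ?thesis using unitP tt by simp
      next
        case False
        have "ip (Qv t) (Qv t') \<noteq> 0" using allQ tt unitQ by (intro ip_dep_nz) (auto simp: q_def)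
        then show ?thesis using orth[OF tt False] False by simp
      qed
    qed
    moreover have "2^n < (2::nat)^(n+k)" using nk by simp
    ultimately show False using cI by simp
  qed
qed

end

theorem mainTheorem4:
  fixes n k :: nat and b :: sp
  assumes "n \<ge> 1" and "k \<ge> 1"
    and "closed_tm 0 (Lam b)" and "alg_tm (Lam b)"
  shows "Tm (Lam b) \<notin> sem (Lolli (Sharp (Bn (n + k))) (Prod (Sharp (Bn n)) (Sharp (Bn k)))) empty_env"
  using contra[OF assms(1,2)] by blast


end
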